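(* The generating function $G(z,x)$ is algebraic of degree $4$ and \[ G(z,x)=\frac{2\left(1-\sqrt{1-4xz^2}\right)}{\sqrt{1-4xz^2}\left(\sqrt{1-4z^2}+\sqrt{1-4xz^2}\right)^2}. \]
   Context: A bicolored Dyck path is a finite sequence of steps from $\{U_1,U_2,D\}$ ($U_1,U_2$ raise the height by $1$, $D$ lowers it by $1$) starting and ending at height $0$ and never going below height $0$; its length is its number of steps, and its up-steps are its $U_1$ and $U_2$ steps. For a bicolored Dyck path containing exactly one $U_2$ step, its weight is $p$, where the $U_2$ step is the $p$-th step of the path. Let $g_{n,m}$ be the total weight of bicolored Dyck paths of length $n$ with exactly one $U_2$ step such that this $U_2$ step is the $m$-th up-step of the path, and $G(z,x)=\sum_{n,m\ge 0}g_{n,m}z^nx^m$. *)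

theory Defs
  imports "HOL-Analysis.Analysis" "HOL-Computational_Algebra.Polynomial"
begin

datatype step = U1 | U2 | D

definition step_val :: "step \<Rightarrow> int" where
  "step_val s = (if s = D then -1 else 1)"

definition height :: "step list \<Rightarrow> int" where
  "height w = (\<Sum>s\<leftarrow>w. step_val s)"

definition is_dyck :: "step list \<Rightarrow> bool" where
  "is_dyck w \<longleftrightarrow> (\<forall>k\<le>length w. 0 \<le> height (take k w)) \<and> height w = 0"

definition num_up :: "step list \<Rightarrow> nat" where
  "num_up w = length (filter (\<lambda>s. s \<noteq> D) w)"

text \<open>Pairs (w, i): w a bicolored Dyck path of length n with exactly one U2 step,
  located at 0-based index i (so at position i+1), and it is the m-th up-step.\<close>
definition gpaths :: "nat \<Rightarrow> nat \<Rightarrow> (step list \<times> nat) set" where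
  "gpaths n m = {(w, i). length w = n \<and> is_dyck w \<and> length (filter (\<lambda>s. s = U2) w) = 1
      \<and> i < length w \<and> w ! i = U2 \<and> num_up (take (Suc i) w) = m}"

definition g :: "nat \<Rightarrow> nat \<Rightarrow> nat" where
  "g n m = (\<Sum>(w, i)\<in>gpaths n m. Suc i)"

definition Gclosed :: "real \<Rightarrow> real \<Rightarrow> real" where
  "Gclosed z x = 2 * (1 - sqrt (1 - 4*x*z^2)) /
     (sqrt (1 - 4*x*z^2) * (sqrt (1 - 4*z^2) + sqrt (1 - 4*x*z^2))^2)"

text \<open>Trivariate polynomials P(z,x,y) as nested univariate polynomials:
  outer variable y, coefficients polynomials in z, whose coefficients are polynomials in x.\<close>
definition eval3 :: "real poly poly poly \<Rightarrow> real \<Rightarrow> real \<Rightarrow> real \<Rightarrow> real" where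
  "eval3 P z x y = poly (map_poly (\<lambda>q. poly (map_poly (\<lambda>c. poly c x) q) z) P) y"

text \<open>f is algebraic of degree k over the rational functions in (z,x), as a function on U.\<close>
definition algebraic_of_degree :: "nat \<Rightarrow> (real \<Rightarrow> real \<Rightarrow> real) \<Rightarrow> (real \<times> real) set \<Rightarrow> bool" where
  "algebraic_of_degree k f U \<longleftrightarrow>
     (\<exists>P. P \<noteq> 0 \<and> degree P = k \<and> (\<forall>(z, x)\<in>U. eval3 P z x (f z x) = 0)) \<and>
     (\<forall>Q. Q \<noteq> 0 \<and> degree Q < k \<longrightarrow> \<not> (\<forall>(z, x)\<in>U. eval3 Q z x (f z x) = 0))"

end

theory Submission
  imports Defs "HOL-Complex_Analysis.Complex_Analysis"
begin

fun pth :: "int \<Rightarrow> int \<Rightarrow> step list \<Rightarrow> int \<Rightarrow> bool" where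
  "pth f a [] b = (a = b)"
| "pth f a (s # w) b = (f \<le> a + step_val s \<and> pth f (a + step_val s) w b)"

lemma height_Nil[simp]: "height [] = 0" by (simp add: height_def)
lemma height_Cons[simp]: "height (s # w) = step_val s + height w" by (simp add: height_def)
lemma height_append[simp]: "height (u @ v) = height u + height v" by (simp add: height_def)

lemma step_val_simps[simp]: "step_val U1 = 1" "step_val U2 = 1" "step_val D = -1"
  by (auto simp: step_val_def)

lemma pth_append: "pth f a (u @ v) b \<longleftrightarrow> (\<exists>c. pth f a u c \<and> pth f c v b)"
  by (induction u arbitrary: a) auto

lemma pth_det: "pth f a w b \<Longrightarrow> b = a + height w"
proof (induction w arbitrary: a)
  case (Cons s w)
  then have "b = (a + step_val s) + height w" by simp
  then show ?case by simp
qed simp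

lemma pth_shift: "pth (f + k) (a + k) w (b + k) \<longleftrightarrow> pth f a w b"
proof (induction w arbitrary: a)
  case Nil then show ?case by simp
next
  case (Cons s w)
  have "a + k + step_val s = (a + step_val s) + k" by simp
  then show ?case using Cons[of "a + step_val s"] by (simp add: algebra_simps)
qed

lemma pth_mono: "pth f' a w b \<Longrightarrow> f \<le> f' \<Longrightarrow> pth f a w b"
  by (induction w arbitrary: a) auto

lemma pth_char: "f \<le> a \<Longrightarrow> pth f a w b \<longleftrightarrow> (\<forall>k\<le>length w. f \<le> a + height (take k w)) \<and> b = a + height w"
proof (induction w arbitrary: a)
  case Nil then show ?case by auto
next
  case (Cons s w)
  have eq: "(\<forall>k\<le>length (s # w). f \<le> a + height (take k (s # w))) \<longleftrightarrow>
        f \<le> a \<and> (\<forall>k\<le>length w. f \<le> a + step_val s + height (take k w))"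
  proof
    assume H: "\<forall>k\<le>length (s # w). f \<le> a + height (take k (s # w))"
    show "f \<le> a \<and> (\<forall>k\<le>length w. f \<le> a + step_val s + height (take k w))"
    proof (intro conjI allI impI)
      show "f \<le> a" using H[rule_format, of 0] by simp
      fix k assume "k \<le> length w"
      then show "f \<le> a + step_val s + height (take k w)" using H[rule_format, of "Suc k"] by simp
    qed
  next
    assume H: "f \<le> a \<and> (\<forall>k\<le>length w. f \<le> a + step_val s + height (take k w))"
    show "\<forall>k\<le>length (s # w). f \<le> a + height (take k (s # w))"
    proof (intro allI impI)
      fix k assume k: "k \<le> length (s # w)"
      show "f \<le> a + height (take k (s # w))"
      proof (cases k)
        case 0 then show ?thesis using H by simp
      next
        case (Suc j) then show ?thesis using H k by (simp add: add.assoc)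
      qed
    qed
  qed
  show ?case
  proof (cases "f \<le> a + step_val s")
    case True
    then show ?thesis using Cons.IH[OF True] Cons.prems eq by (auto simp: add.assoc)
  next
    case False
    then show ?thesis using eq by (auto dest: spec[of _ 0])
  qed
qed

lemma is_dyck_pth: "is_dyck w \<longleftrightarrow> pth 0 0 w 0"
  using pth_char[of 0 0 w 0] unfolding is_dyck_def by auto

lemma first_passage:
  "pth f (a+1) w b \<Longrightarrow> b \<le> a \<Longrightarrow> \<exists>u v. w = u @ D # v \<and> pth (a+1) (a+1) u (a+1) \<and> pth f a v b"
proof (induction "length w" arbitrary: w a rule: less_induct)
  case less
  show ?case
  proof (cases w)
    case Nil then show ?thesis using less.prems by simp
  next
    case (Cons s w')
    show ?thesis
    proof (cases "s = D")
      case True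
      then show ?thesis using less.prems Cons by (intro exI[of _ "[]"] exI[of _ w']) auto
    next
      case False
      then have sv: "step_val s = 1" by (cases s) auto
      have p': "pth f ((a+1)+1) w' b" using less.prems Cons sv by (simp add: add.assoc)
      obtain u1 v1 where w': "w' = u1 @ D # v1" and u1: "pth (a+1+1) (a+1+1) u1 (a+1+1)"
        and v1: "pth f (a+1) v1 b"
        using less.hyps[of w' "a+1"] p' less.prems Cons by auto
      obtain u2 v2 where v1': "v1 = u2 @ D # v2" and u2: "pth (a+1) (a+1) u2 (a+1)"
        and v2: "pth f a v2 b"
        using less.hyps[of v1 a] v1 less.prems Cons w' by auto
      have "pth (a+1) (a+1+1) u1 (a+1+1)" using pth_mono[OF u1] by simp
      moreover have "pth (a+1) (a+1+1) (D # u2) (a+1)" using u2 by (simp add: add.commute)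
      ultimately have "pth (a+1) (a+1+1) (u1 @ D # u2) (a+1)"
        unfolding pth_append by blast
      then have "pth (a+1) (a+1) (s # u1 @ D # u2) (a+1)"
        using sv by simp
      then show ?thesis using Cons w' v1' v2
        by (intro exI[of _ "s # u1 @ D # u2"] exI[of _ v2]) auto
    qed
  qed
qed

lemma no_D_after:
  assumes "pth F F (u @ D # r) G" "pth F F u F" shows False
proof -
  obtain c where "pth F F u c" "pth F c (D # r) G" using assms(1) by (auto simp: pth_append)
  moreover have "c = F" using pth_det[OF assms(2)] pth_det[OF \<open>pth F F u c\<close>] by simp
  ultimately show False by simp
qed

lemma take_split_D:
  assumes "length u < length u'" "u @ D # v = u' @ D # v'"
  obtains r where "u' = u @ D # r"
proof -
  have "u' = take (length u') (u' @ D # v')" by simp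
  also have "\<dots> = take (length u') (u @ D # v)" using assms(2) by simp
  also have "\<dots> = u @ take (length u' - length u) (D # v)" using assms(1) by (simp add: take_append)
  also have "\<dots> = u @ D # take (length u' - length u - 1) v"
    using assms(1) by (cases "length u' - length u") auto
  finally show ?thesis using that by blast
qed

lemma passage_unique:
  assumes eq: "u @ D # v = u' @ D # v'" and p: "pth F F u F" "pth F F u' F"
  shows "u = u' \<and> v = v'"
proof (cases "length u = length u'")
  case True then show ?thesis using eq by auto
next
  case False
  then consider "length u < length u'" | "length u' < length u" by linarith
  then show ?thesis
  proof cases
    case 1
    then obtain r where "u' = u @ D # r" using eq by (rule take_split_D)
    then show ?thesis using no_D_after p by blast
  next
    case 2
    then obtain r where "u = u' @ D # r" using eq[symmetric] by (rule take_split_D)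
    then show ?thesis using no_D_after p by blast
  qed
qed

lemma pth_end: "pth f a w b \<Longrightarrow> f \<le> b \<or> (w = [] \<and> a = b)"
  by (induction w arbitrary: a) auto

fun swp :: "step \<Rightarrow> step" where "swp U1 = D" | "swp D = U1" | "swp U2 = U2"

definition rc :: "step list \<Rightarrow> step list" where "rc w = rev (map swp w)"

lemma swp_swp[simp]: "swp (swp s) = s" by (cases s) auto
lemma rc_rc[simp]: "rc (rc w) = w" by (simp add: rc_def rev_map comp_def)
lemma rc_Nil[simp]: "rc [] = []" by (simp add: rc_def)
lemma rc_Cons: "rc (s # w) = rc w @ [swp s]" by (simp add: rc_def)
lemma length_rc[simp]: "length (rc w) = length w" by (simp add: rc_def)
lemma set_rc_U2[simp]: "U2 \<in> set (rc w) \<longleftrightarrow> U2 \<in> set w"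
proof -
  have e: "swp s = U2 \<longleftrightarrow> s = U2" for s by (cases s) auto
  have "U2 \<in> swp ` set w \<longleftrightarrow> U2 \<in> set w"
  proof
    assume "U2 \<in> swp ` set w"
    then obtain s where "s \<in> set w" "U2 = swp s" by blast
    then show "U2 \<in> set w" using e by metis
  next
    assume "U2 \<in> set w"
    then show "U2 \<in> swp ` set w" using swp.simps(3) by (metis image_eqI)
  qed
  then show ?thesis by (simp add: rc_def)
qed
lemma step_val_swp[simp]: "s \<noteq> U2 \<Longrightarrow> step_val (swp s) = - step_val s" by (cases s) auto

lemma pth_rc: "U2 \<notin> set w \<Longrightarrow> f \<le> a \<Longrightarrow> f \<le> b \<Longrightarrow> pth f a w b \<longleftrightarrow> pth f b (rc w) a"
proof (induction w arbitrary: a)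
  case Nil then show ?case by auto
next
  case (Cons s w)
  have sU: "s \<noteq> U2" using Cons.prems by auto
  have r: "pth f b (rc (s # w)) a \<longleftrightarrow> pth f b (rc w) (a + step_val s) \<and> f \<le> a"
    using sU by (auto simp: rc_Cons pth_append)
  show ?case
  proof
    assume "pth f a (s # w) b"
    then have 1: "f \<le> a + step_val s" "pth f (a + step_val s) w b" by auto
    then show "pth f b (rc (s # w)) a" using Cons r by auto
  next
    assume "pth f b (rc (s # w)) a"
    then have 2: "pth f b (rc w) (a + step_val s)" using r by auto
    have "f \<le> a + step_val s" using pth_end[OF 2] Cons.prems by auto
    then show "pth f a (s # w) b" using Cons.IH 2 Cons.prems by auto
  qed
qed

definition ups :: "step list \<Rightarrow> nat" where "ups w = length (filter (\<lambda>s. s = U1) w)"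
definition dns :: "step list \<Rightarrow> nat" where "dns w = length (filter (\<lambda>s. s = D) w)"

lemma ups_simps[simp]: "ups [] = 0" "ups (U1 # w) = Suc (ups w)" "ups (D # w) = ups w"
  "ups (U2 # w) = ups w" "ups (u @ v) = ups u + ups v"
  by (auto simp: ups_def)
lemma dns_simps[simp]: "dns [] = 0" "dns (U1 # w) = dns w" "dns (D # w) = Suc (dns w)"
  "dns (U2 # w) = dns w" "dns (u @ v) = dns u + dns v"
  by (auto simp: dns_def)
lemma ups_rc[simp]: "ups (rc w) = dns w"
  by (induction w) (simp, rename_tac a w, case_tac a, auto simp: rc_Cons)
lemma dns_rc[simp]: "dns (rc w) = ups w"
  by (induction w) (simp, rename_tac a w, case_tac a, auto simp: rc_Cons)
lemma ups_dns_len: "U2 \<notin> set w \<Longrightarrow> ups w + dns w = length w"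
proof (induction w)
  case (Cons s w) then show ?case by (cases s) auto
qed simp

definition W :: "real \<Rightarrow> real \<Rightarrow> step list \<Rightarrow> real" where
  "W \<alpha> \<beta> w = \<alpha> ^ ups w * \<beta> ^ dns w"

lemma W_simps[simp]: "W \<alpha> \<beta> [] = 1" "W \<alpha> \<beta> (U1 # w) = \<alpha> * W \<alpha> \<beta> w"
  "W \<alpha> \<beta> (D # w) = \<beta> * W \<alpha> \<beta> w" "W \<alpha> \<beta> (u @ v) = W \<alpha> \<beta> u * W \<alpha> \<beta> v"
  "W \<alpha> \<beta> (rc w) = W \<beta> \<alpha> w"
  by (auto simp: W_def power_add)

definition M :: "step list \<Rightarrow> real" where "M w = (1/4) ^ length w"

lemma UNIV_step: "(UNIV :: step set) = {U1, U2, D}" by (auto intro: step.exhaust)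

lemma card_len: "card {w :: step list. length w = n} = 3 ^ n"
proof -
  have "card {w :: step list. set w \<subseteq> UNIV \<and> length w = n} = card (UNIV :: step set) ^ n"
    by (rule card_lists_length_eq) (simp add: UNIV_step)
  moreover have "CARD(step) = 3" by (simp add: UNIV_step)
  ultimately show ?thesis by simp
qed

lemma finite_len_le: "finite {w :: step list. length w \<le> N}"
proof -
  have "finite {w :: step list. set w \<subseteq> UNIV \<and> length w \<le> N}"
    by (rule finite_lists_length_le) (simp add: UNIV_step)
  then show ?thesis by simp
qed

lemma sum_M_le: "(\<Sum>w\<in>{w. length w \<le> N}. M w) = 4 - 4 * (3/4) ^ Suc N"
proof (induction N)
  case 0
  have "{w :: step list. length w \<le> 0} = {[]}" by auto
  then show ?case by (simp add: M_def)
next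
  case (Suc N)
  have e: "{w :: step list. length w \<le> Suc N} = {w. length w \<le> N} \<union> {w. length w = Suc N}" by auto
  have f2: "finite {w :: step list. length w = Suc N}"
    using finite_len_le[of "Suc N"] by (rule rev_finite_subset) auto
  have "(\<Sum>w\<in>{w. length w = Suc N}. M w) = (\<Sum>w\<in>{w::step list. length w = Suc N}. (1/4) ^ Suc N)"
    by (rule sum.cong) (auto simp: M_def)
  also have "\<dots> = 3 ^ Suc N * (1/4) ^ Suc N" using card_len[of "Suc N"] by simp
  finally have s2: "(\<Sum>w\<in>{w. length w = Suc N}. M w) = (3/4) ^ Suc N"
    by (simp add: power_mult_distrib[symmetric])
  have "(\<Sum>w\<in>{w. length w \<le> Suc N}. M w) = (\<Sum>w\<in>{w. length w \<le> N}. M w) + (\<Sum>w\<in>{w. length w = Suc N}. M w)"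
    unfolding e by (rule sum.union_disjoint) (use finite_len_le f2 in auto)
  then show ?case using Suc s2 by simp
qed

lemma M_summable: "M summable_on UNIV"
proof (rule nonneg_bdd_above_summable_on)
  show "0 \<le> M x" for x by (simp add: M_def)
  show "bdd_above (sum M ` {F. F \<subseteq> UNIV \<and> finite F})"
  proof (rule bdd_aboveI2)
    fix F :: "step list set" assume "F \<in> {F. F \<subseteq> UNIV \<and> finite F}"
    then have fin: "finite F" by simp
    define N where "N = Max (insert 0 (length ` F))"
    have sub: "F \<subseteq> {w. length w \<le> N}" using fin by (auto simp: N_def)
    have "sum M F \<le> sum M {w. length w \<le> N}"
      by (rule sum_mono2[OF finite_len_le sub]) (simp add: M_def)
    also have "\<dots> \<le> 4" by (simp add: sum_M_le)
    finally show "sum M F \<le> 4" .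
  qed
qed

lemma summable_dom:
  fixes f :: "'a \<Rightarrow> real"
  assumes "q summable_on A" "\<And>x. x \<in> A \<Longrightarrow> \<bar>f x\<bar> \<le> q x"
  shows "f summable_on A"
proof -
  have "(\<lambda>x. norm (f x)) summable_on A"
    by (rule Infinite_Sum.abs_summable_on_comparison_test'[OF assms(1)]) (use assms(2) in auto)
  then show ?thesis using summable_on_iff_abs_summable_on_real by blast
qed

lemma M_summable_on: "M summable_on A"
  using M_summable by (rule summable_on_subset) auto

lemma abs_dom:
  fixes f :: "'a \<Rightarrow> real"
  assumes "q summable_on A" "\<And>x. x \<in> A \<Longrightarrow> \<bar>f x\<bar> \<le> q x"
  shows "(\<lambda>x. \<bar>f x\<bar>) summable_on A"
  by (rule summable_dom[OF assms(1)]) (use assms(2) in auto)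

lemma has_sum_times:
  fixes f q :: "'a \<Rightarrow> real"
  assumes fa: "(f has_sum a) A" and gb: "(q has_sum b) B"
    and fs: "(\<lambda>x. \<bar>f x\<bar>) summable_on A" and gs: "(\<lambda>y. \<bar>q y\<bar>) summable_on B"
  shows "((\<lambda>(x,y). f x * q y) has_sum (a * b)) (A \<times> B)"
proof -
  have "(\<lambda>(x,y). \<bar>f x\<bar> * \<bar>q y\<bar>) summable_on Sigma A (\<lambda>_. B)"
  proof (rule summable_on_SigmaI[where g = "\<lambda>x. \<bar>f x\<bar> * infsum (\<lambda>y. \<bar>q y\<bar>) B"])
    show "((\<lambda>y. case (x, y) of (x, y) \<Rightarrow> \<bar>f x\<bar> * \<bar>q y\<bar>) has_sum \<bar>f x\<bar> * infsum (\<lambda>y. \<bar>q y\<bar>) B) B" for x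
      using has_sum_cmult_right[OF has_sum_infsum[OF gs]] by simp
    show "(\<lambda>x. \<bar>f x\<bar> * infsum (\<lambda>y. \<bar>q y\<bar>) B) summable_on A"
      using summable_on_cmult_left[OF fs] by simp
  qed auto
  then have sm: "(\<lambda>(x,y). f x * q y) summable_on A \<times> B"
    by (rule summable_dom) (auto simp: abs_mult)
  have j: "((\<lambda>(x,y). f x * q y) has_sum infsum (\<lambda>(x,y). f x * q y) (A \<times> B)) (Sigma A (\<lambda>_. B))"
    using has_sum_infsum[OF sm] by simp
  have "((\<lambda>x. f x * b) has_sum infsum (\<lambda>(x,y). f x * q y) (A \<times> B)) A"
    by (rule has_sum_Sigma'[OF j]) (use has_sum_cmult_right[OF gb] in simp)
  moreover have "((\<lambda>x. f x * b) has_sum a * b) A" using has_sum_cmult_left[OF fa] by simp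
  ultimately have "infsum (\<lambda>(x,y). f x * q y) (A \<times> B) = a * b" using has_sum_unique by blast
  then show ?thesis using has_sum_infsum[OF sm] by simp
qed

definition S :: "nat \<Rightarrow> step list set" where
  "S h = {w. U2 \<notin> set w \<and> pth 0 (int h) w 0}"

lemma pth_shift0: "pth (int h + 1) (int h + 1) u (int h + 1) \<longleftrightarrow> pth 0 0 u 0"
  using pth_shift[of 0 "int h + 1" 0 u 0] by simp

lemma S0_eq: "S 0 = insert [] ((#) U1 ` S 1)"
proof (intro set_eqI iffI)
  fix w assume w: "w \<in> S 0"
  show "w \<in> insert [] ((#) U1 ` S 1)"
  proof (cases w)
    case Nil then show ?thesis by simp
  next
    case (Cons s w')
    then have "s \<noteq> U2" "s \<noteq> D" using w by (auto simp: S_def)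
    then have "s = U1" by (cases s) auto
    then show ?thesis using w Cons by (auto simp: S_def)
  qed
next
  fix w assume "w \<in> insert [] ((#) U1 ` S 1)"
  then show "w \<in> S 0" by (auto simp: S_def)
qed

lemma S_Suc_eq: "S (Suc h) = (\<lambda>(u,v). u @ D # v) ` (S 0 \<times> S h)"
proof (intro set_eqI iffI)
  fix w assume w: "w \<in> S (Suc h)"
  then have "pth 0 (int h + 1) w 0" by (simp add: S_def add.commute)
  then obtain u v where "w = u @ D # v" "pth (int h+1) (int h+1) u (int h+1)" "pth 0 (int h) v 0"
    using first_passage[of 0 "int h" w 0] by auto
  then show "w \<in> (\<lambda>(u,v). u @ D # v) ` (S 0 \<times> S h)"
    using w by (auto simp: S_def pth_shift0 image_iff)
next
  fix w assume "w \<in> (\<lambda>(u,v). u @ D # v) ` (S 0 \<times> S h)"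
  then obtain u v where w: "w = u @ D # v" and u: "u \<in> S 0" and v: "v \<in> S h" by auto
  have "pth (int h+1) (int h+1) u (int h+1)" using u by (simp add: S_def pth_shift0)
  then have "pth 0 (int h+1) u (int h+1)" by (rule pth_mono) simp
  moreover have "pth 0 (int h + 1) (D # v) 0" using v by (simp add: S_def)
  ultimately have "pth 0 (int h + 1) w 0" unfolding w pth_append by blast
  then show "w \<in> S (Suc h)" using u v w by (simp add: S_def add.commute)
qed

lemma S_Suc_inj: "inj_on (\<lambda>(u,v). u @ D # v) (S 0 \<times> S h)"
proof (rule inj_onI, clarify)
  fix u v u' v' assume u: "u \<in> S 0" "v \<in> S h" "u' \<in> S 0" "v' \<in> S h" and eq: "u @ D # v = u' @ D # v'"
  have p1: "pth (int h+1) (int h+1) u (int h+1)" "pth (int h+1) (int h+1) u' (int h+1)"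
    using u by (auto simp: S_def pth_shift0)
  show "u = u' \<and> v = v'" using passage_unique[OF eq p1] .
qed


lemma pow_le_2: "real (Suc n) \<le> 2 ^ n"
proof -
  have "n < 2 ^ n"
  proof (induction n)
    case (Suc n)
    have "1 \<le> (2::nat) ^ n" by simp
    have "(2::nat) ^ Suc n = 2 * 2 ^ n" by simp
    with Suc \<open>1 \<le> (2::nat) ^ n\<close> show ?case by linarith
  qed simp
  then have "Suc n \<le> 2 ^ n" by (rule Suc_leI)
  then have "real (Suc n) \<le> real (2 ^ n)" by linarith
  then show ?thesis by simp
qed

lemma W_bound:
  assumes "\<bar>\<alpha>\<bar> \<le> 1/8" "\<bar>\<beta>\<bar> \<le> 1/8" "U2 \<notin> set w"
  shows "\<bar>W \<alpha> \<beta> w\<bar> \<le> (1/8) ^ length w"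
proof -
  have "\<bar>W \<alpha> \<beta> w\<bar> = \<bar>\<alpha>\<bar> ^ ups w * \<bar>\<beta>\<bar> ^ dns w" by (simp add: W_def abs_mult power_abs)
  also have "\<dots> \<le> (1/8) ^ ups w * (1/8) ^ dns w"
    using assms by (intro mult_mono power_mono) auto
  also have "\<dots> = (1/8) ^ length w" using ups_dns_len[OF assms(3)] by (simp add: power_add[symmetric])
  finally show ?thesis .
qed

lemma WE_bound:
  assumes "\<bar>\<alpha>\<bar> \<le> 1/8" "\<bar>\<beta>\<bar> \<le> 1/8" "U2 \<notin> set w"
  shows "\<bar>real (length w + 1) * W \<alpha> \<beta> w\<bar> \<le> M w"
proof -
  have "\<bar>real (length w + 1) * W \<alpha> \<beta> w\<bar> = real (Suc (length w)) * \<bar>W \<alpha> \<beta> w\<bar>" by (simp add: abs_mult)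
  also have "\<dots> \<le> 2 ^ length w * (1/8) ^ length w"
    using W_bound[OF assms] pow_le_2 by (intro mult_mono) auto
  also have "\<dots> = M w" by (simp add: M_def power_mult_distrib[symmetric])
  finally show ?thesis .
qed

lemma W_le_M:
  assumes "\<bar>\<alpha>\<bar> \<le> 1/8" "\<bar>\<beta>\<bar> \<le> 1/8" "U2 \<notin> set w"
  shows "\<bar>W \<alpha> \<beta> w\<bar> \<le> M w"
proof -
  have "\<bar>W \<alpha> \<beta> w\<bar> \<le> \<bar>real (length w + 1) * W \<alpha> \<beta> w\<bar>"
    using mult_right_mono[of 1 "1 + real (length w)" "\<bar>W \<alpha> \<beta> w\<bar>"] by (simp add: abs_mult)
  then show ?thesis using WE_bound[OF assms] by linarith
qed

lemma S_noU2: "w \<in> S h \<Longrightarrow> U2 \<notin> set w" by (simp add: S_def)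

definition cS :: "real \<Rightarrow> real \<Rightarrow> nat \<Rightarrow> real" where "cS \<alpha> \<beta> h = infsum (W \<alpha> \<beta>) (S h)"
definition WE :: "real \<Rightarrow> real \<Rightarrow> step list \<Rightarrow> real" where
  "WE \<alpha> \<beta> w = real (length w + 1) * W \<alpha> \<beta> w"
definition eS :: "real \<Rightarrow> real \<Rightarrow> nat \<Rightarrow> real" where "eS \<alpha> \<beta> h = infsum (WE \<alpha> \<beta>) (S h)"

context
  fixes \<alpha> \<beta> :: real
  assumes ab: "\<bar>\<alpha>\<bar> \<le> 1/8" "\<bar>\<beta>\<bar> \<le> 1/8"
begin

lemma W_summ: "W \<alpha> \<beta> summable_on S h"
  by (rule summable_dom[OF M_summable_on]) (use W_le_M[OF ab] S_noU2 in blast)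
lemma W_abs_summ: "(\<lambda>w. \<bar>W \<alpha> \<beta> w\<bar>) summable_on S h"
  by (rule abs_dom[OF M_summable_on]) (use W_le_M[OF ab] S_noU2 in blast)
lemma WE_summ: "WE \<alpha> \<beta> summable_on S h"
  by (rule summable_dom[OF M_summable_on]) (use WE_bound[OF ab] S_noU2 in \<open>auto simp: WE_def\<close>)
lemma WE_abs_summ: "(\<lambda>w. \<bar>WE \<alpha> \<beta> w\<bar>) summable_on S h"
  by (rule abs_dom[OF M_summable_on]) (use WE_bound[OF ab] S_noU2 in \<open>auto simp: WE_def\<close>)

lemma cS_has: "(W \<alpha> \<beta> has_sum cS \<alpha> \<beta> h) (S h)"
  unfolding cS_def using W_summ by simp
lemma eS_has: "(WE \<alpha> \<beta> has_sum eS \<alpha> \<beta> h) (S h)"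
  unfolding eS_def using WE_summ by simp

lemma S0_sum:
  fixes f F :: "step list \<Rightarrow> real"
  assumes "(f has_sum a) (S 1)" and "\<And>v. v \<in> S 1 \<Longrightarrow> F (U1 # v) = f v"
  shows "(F has_sum (F [] + a)) (S 0)"
proof -
  have "((F \<circ> (#) U1) has_sum a) (S 1)"
    using assms(1) by (rule has_sum_cong[THEN iffD1, rotated]) (use assms(2) in auto)
  then have "(F has_sum a) ((#) U1 ` S 1)" by (subst has_sum_reindex) auto
  then have "(F has_sum (F [] + a)) (insert [] ((#) U1 ` S 1))" by (intro has_sum_insert) auto
  then show ?thesis using S0_eq by simp
qed

lemma SSuc_sum:
  fixes F :: "step list \<Rightarrow> real"
  assumes "(f has_sum a) (S 0 \<times> S h)" and "\<And>u v. u \<in> S 0 \<Longrightarrow> v \<in> S h \<Longrightarrow> F (u @ D # v) = f (u, v)"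
  shows "(F has_sum a) (S (Suc h))"
proof -
  have "((F \<circ> (\<lambda>(u,v). u @ D # v)) has_sum a) (S 0 \<times> S h)"
    using assms(1) by (rule has_sum_cong[THEN iffD1, rotated]) (use assms(2) in auto)
  then show ?thesis using S_Suc_eq[of h] S_Suc_inj[of h] by (simp add: has_sum_reindex)
qed

lemma R1: "cS \<alpha> \<beta> 0 = 1 + \<alpha> * cS \<alpha> \<beta> 1"
proof -
  have "(W \<alpha> \<beta> has_sum (W \<alpha> \<beta> [] + \<alpha> * cS \<alpha> \<beta> 1)) (S 0)"
    by (rule S0_sum[OF has_sum_cmult_right[OF cS_has]]) simp
  from has_sum_unique[OF cS_has[of 0] this] show ?thesis by simp
qed

lemma R2: "cS \<alpha> \<beta> (Suc h) = \<beta> * cS \<alpha> \<beta> 0 * cS \<alpha> \<beta> h"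
proof -
  have "((\<lambda>(u,v). W \<alpha> \<beta> u * W \<alpha> \<beta> v) has_sum (cS \<alpha> \<beta> 0 * cS \<alpha> \<beta> h)) (S 0 \<times> S h)"
    by (rule has_sum_times[OF cS_has cS_has W_abs_summ W_abs_summ])
  then have "((\<lambda>x. \<beta> * (case x of (u,v) \<Rightarrow> W \<alpha> \<beta> u * W \<alpha> \<beta> v)) has_sum \<beta> * (cS \<alpha> \<beta> 0 * cS \<alpha> \<beta> h)) (S 0 \<times> S h)"
    by (rule has_sum_cmult_right)
  then have "(W \<alpha> \<beta> has_sum \<beta> * (cS \<alpha> \<beta> 0 * cS \<alpha> \<beta> h)) (S (Suc h))"
    by (rule SSuc_sum) auto
  from has_sum_unique[OF cS_has[of "Suc h"] this] show ?thesis by (simp add: mult.assoc)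
qed

lemma R3: "eS \<alpha> \<beta> 0 = 1 + \<alpha> * (eS \<alpha> \<beta> 1 + cS \<alpha> \<beta> 1)"
proof -
  have "((\<lambda>v. \<alpha> * (WE \<alpha> \<beta> v + W \<alpha> \<beta> v)) has_sum \<alpha> * (eS \<alpha> \<beta> 1 + cS \<alpha> \<beta> 1)) (S 1)"
    by (rule has_sum_cmult_right[OF has_sum_add[OF eS_has cS_has]])
  then have "(WE \<alpha> \<beta> has_sum (WE \<alpha> \<beta> [] + \<alpha> * (eS \<alpha> \<beta> 1 + cS \<alpha> \<beta> 1))) (S 0)"
    by (rule S0_sum) (simp add: WE_def algebra_simps)
  from has_sum_unique[OF eS_has[of 0] this] show ?thesis by (simp add: WE_def)
qed

lemma R4: "eS \<alpha> \<beta> (Suc h) = \<beta> * (eS \<alpha> \<beta> 0 * cS \<alpha> \<beta> h + cS \<alpha> \<beta> 0 * eS \<alpha> \<beta> h)"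
proof -
  have a: "((\<lambda>(u,v). WE \<alpha> \<beta> u * W \<alpha> \<beta> v) has_sum (eS \<alpha> \<beta> 0 * cS \<alpha> \<beta> h)) (S 0 \<times> S h)"
    by (rule has_sum_times[OF eS_has cS_has WE_abs_summ W_abs_summ])
  have b: "((\<lambda>(u,v). W \<alpha> \<beta> u * WE \<alpha> \<beta> v) has_sum (cS \<alpha> \<beta> 0 * eS \<alpha> \<beta> h)) (S 0 \<times> S h)"
    by (rule has_sum_times[OF cS_has eS_has W_abs_summ WE_abs_summ])
  have "((\<lambda>x. \<beta> * ((case x of (u,v) \<Rightarrow> WE \<alpha> \<beta> u * W \<alpha> \<beta> v) + (case x of (u,v) \<Rightarrow> W \<alpha> \<beta> u * WE \<alpha> \<beta> v)))
      has_sum \<beta> * (eS \<alpha> \<beta> 0 * cS \<alpha> \<beta> h + cS \<alpha> \<beta> 0 * eS \<alpha> \<beta> h)) (S 0 \<times> S h)"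
    by (rule has_sum_cmult_right[OF has_sum_add[OF a b]])
  then have "(WE \<alpha> \<beta> has_sum \<beta> * (eS \<alpha> \<beta> 0 * cS \<alpha> \<beta> h + cS \<alpha> \<beta> 0 * eS \<alpha> \<beta> h)) (S (Suc h))"
    by (rule SSuc_sum) (auto simp: WE_def algebra_simps)
  from has_sum_unique[OF eS_has[of "Suc h"] this] show ?thesis by simp
qed

lemma cS_closed: "cS \<alpha> \<beta> h = \<beta> ^ h * cS \<alpha> \<beta> 0 ^ (h + 1)"
proof (induction h)
  case (Suc h)
  have "cS \<alpha> \<beta> (Suc h) = \<beta> * cS \<alpha> \<beta> 0 * (\<beta> ^ h * cS \<alpha> \<beta> 0 ^ (h + 1))"
    using R2[of h] Suc.IH by simp
  then show ?case by (simp add: mult_ac)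
qed simp

lemma eS_closed: "eS \<alpha> \<beta> h = real (h + 1) * \<beta> ^ h * cS \<alpha> \<beta> 0 ^ h * eS \<alpha> \<beta> 0"
proof (induction h)
  case (Suc h)
  have "eS \<alpha> \<beta> (Suc h) = \<beta> * (eS \<alpha> \<beta> 0 * (\<beta> ^ h * cS \<alpha> \<beta> 0 ^ (h + 1))
     + cS \<alpha> \<beta> 0 * (real (h + 1) * \<beta> ^ h * cS \<alpha> \<beta> 0 ^ h * eS \<alpha> \<beta> 0))"
    using R4[of h] Suc.IH cS_closed[of h] by simp
  also have "\<dots> = real (Suc h + 1) * \<beta> ^ Suc h * cS \<alpha> \<beta> 0 ^ Suc h * eS \<alpha> \<beta> 0"
    by (simp add: algebra_simps)
  finally show ?case .
qed simp

lemma c_quad: "cS \<alpha> \<beta> 0 = 1 + \<alpha> * \<beta> * cS \<alpha> \<beta> 0 ^ 2"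
proof -
  have c1: "cS \<alpha> \<beta> 1 = \<beta> * cS \<alpha> \<beta> 0 * cS \<alpha> \<beta> 0" using R2[of 0] by simp
  have r1: "cS \<alpha> \<beta> 0 = 1 + \<alpha> * cS \<alpha> \<beta> 1" by (rule R1)
  show ?thesis using c1 r1 by algebra
qed

lemma e_eq: "eS \<alpha> \<beta> 0 * (1 - 2 * \<alpha> * \<beta> * cS \<alpha> \<beta> 0) = cS \<alpha> \<beta> 0"
proof -
  have c1: "cS \<alpha> \<beta> 1 = \<beta> * cS \<alpha> \<beta> 0 * cS \<alpha> \<beta> 0" using R2[of 0] by simp
  have e1: "eS \<alpha> \<beta> 1 = \<beta> * (eS \<alpha> \<beta> 0 * cS \<alpha> \<beta> 0 + cS \<alpha> \<beta> 0 * eS \<alpha> \<beta> 0)"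
    using R4[of 0] cS_closed[of 0] by simp
  have r3: "eS \<alpha> \<beta> 0 = 1 + \<alpha> * (eS \<alpha> \<beta> 1 + cS \<alpha> \<beta> 1)" by (rule R3)
  have r1: "cS \<alpha> \<beta> 0 = 1 + \<alpha> * cS \<alpha> \<beta> 1" by (rule R1)
  show ?thesis using c1 e1 r3 r1 by algebra
qed

lemma c_bound: "\<bar>cS \<alpha> \<beta> 0\<bar> \<le> 4"
proof -
  have "\<bar>cS \<alpha> \<beta> 0\<bar> \<le> infsum (\<lambda>w. norm (W \<alpha> \<beta> w)) (S 0)"
    unfolding cS_def using norm_infsum_bound[of "W \<alpha> \<beta>" "S 0"] W_abs_summ by simp
  also have "\<dots> \<le> infsum M (S 0)"
    by (rule infsum_mono) (use W_abs_summ M_summable_on W_le_M[OF ab] S_noU2 in auto)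
  also have "\<dots> \<le> infsum M UNIV"
    by (rule infsum_mono_neutral) (use M_summable_on in \<open>auto simp: M_def\<close>)
  also have "\<dots> \<le> 4"
  proof (rule infsum_le_finite_sums[OF M_summable])
    fix F :: "step list set" assume fin: "finite F"
    define N where "N = Max (insert 0 (length ` F))"
    have sub: "F \<subseteq> {w. length w \<le> N}" using fin by (auto simp: N_def)
    have "sum M F \<le> sum M {w. length w \<le> N}"
      by (rule sum_mono2[OF finite_len_le sub]) (simp add: M_def)
    also have "\<dots> \<le> 4" by (simp add: sum_M_le)
    finally show "sum M F \<le> 4" .
  qed
  finally show ?thesis .
qed

lemma c_sqrt: "1 - 2 * \<alpha> * \<beta> * cS \<alpha> \<beta> 0 = sqrt (1 - 4 * \<alpha> * \<beta>)"
proof -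
  define c where "c = cS \<alpha> \<beta> 0"
  have ab2: "\<bar>\<alpha> * \<beta>\<bar> \<le> 1/64"
  proof -
    have "\<bar>\<alpha> * \<beta>\<bar> = \<bar>\<alpha>\<bar> * \<bar>\<beta>\<bar>" by (simp add: abs_mult)
    also have "\<dots> \<le> 1/8 * (1/8)" using ab by (intro mult_mono) auto
    finally show ?thesis by simp
  qed
  have "\<bar>2 * \<alpha> * \<beta> * c\<bar> = 2 * \<bar>\<alpha> * \<beta>\<bar> * \<bar>c\<bar>" by (simp add: abs_mult)
  also have "\<dots> \<le> 2 * (1/64) * 4" using ab2 c_bound unfolding c_def by (intro mult_mono) auto
  finally have pos: "0 \<le> 1 - 2 * \<alpha> * \<beta> * c" by simp
  have q: "c = 1 + \<alpha> * \<beta> * c ^ 2" using c_quad unfolding c_def .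
  have "(1 - 2 * \<alpha> * \<beta> * c) ^ 2 = 1 - 4 * \<alpha> * \<beta> * (c - \<alpha> * \<beta> * c ^ 2)"
    by (simp add: power2_eq_square algebra_simps)
  also have "\<dots> = 1 - 4 * \<alpha> * \<beta>" using q by simp
  finally show ?thesis using real_sqrt_unique[OF _ pos] unfolding c_def by simp
qed

end

lemma take_split_gen:
  assumes "length u < length u'" "u @ c # v = u' @ c' # v'"
  obtains r where "u' = u @ c # r"
proof -
  have "u' = take (length u') (u' @ c' # v')" by simp
  also have "\<dots> = take (length u') (u @ c # v)" using assms(2) by simp
  also have "\<dots> = u @ take (length u' - length u) (c # v)" using assms(1) by (simp add: take_append)
  also have "\<dots> = u @ c # take (length u' - length u - 1) v"
    using assms(1) by (cases "length u' - length u") auto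
  finally show ?thesis using that by blast
qed

lemma split_U2_unique:
  assumes "A @ U2 # B = A' @ U2 # B'" "U2 \<notin> set A" "U2 \<notin> set A'"
  shows "A = A' \<and> B = B'"
proof (cases "length A = length A'")
  case True then show ?thesis using assms(1) by auto
next
  case False
  then consider "length A < length A'" | "length A' < length A" by linarith
  then show ?thesis
  proof cases
    case 1
    then obtain r where "A' = A @ U2 # r" using assms(1) by (rule take_split_gen)
    then show ?thesis using assms(3) by simp
  next
    case 2
    then obtain r where "A = A' @ U2 # r" using assms(1)[symmetric] by (rule take_split_gen)
    then show ?thesis using assms(2) by simp
  qed
qed

lemma num_up_noU2: "U2 \<notin> set A \<Longrightarrow> num_up A = ups A"
proof (induction A)
  case (Cons s A) then show ?case by (cases s) (auto simp: num_up_def)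
qed (simp add: num_up_def)

definition Pre :: "nat \<Rightarrow> step list set" where "Pre h = rc ` S h"

lemma Pre_char: "A \<in> Pre h \<longleftrightarrow> U2 \<notin> set A \<and> pth 0 0 A (int h)"
proof
  assume "A \<in> Pre h"
  then obtain v where v: "v \<in> S h" "A = rc v" by (auto simp: Pre_def)
  then have "U2 \<notin> set v" "pth 0 (int h) v 0" by (auto simp: S_def)
  then show "U2 \<notin> set A \<and> pth 0 0 A (int h)" using v pth_rc[of v 0 "int h" 0] by simp
next
  assume a: "U2 \<notin> set A \<and> pth 0 0 A (int h)"
  then have "rc A \<in> S h" using pth_rc[of A 0 0 "int h"] by (simp add: S_def)
  then show "A \<in> Pre h" unfolding Pre_def by (metis rc_rc image_eqI)
qed

definition Sig :: "(nat \<times> step list \<times> step list) set" where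
  "Sig = Sigma UNIV (\<lambda>h. Pre h \<times> S (Suc h))"

definition Phi :: "nat \<times> step list \<times> step list \<Rightarrow> (nat \<times> nat) \<times> (step list \<times> nat)" where
  "Phi = (\<lambda>(h, A, B). ((length A + 1 + length B, ups A + 1), (A @ U2 # B, length A)))"

lemma filter_U2_count:
  assumes "U2 \<notin> set A" "U2 \<notin> set B"
  shows "length (filter (\<lambda>s. s = U2) (A @ U2 # B)) = 1"
proof -
  have "filter (\<lambda>s. s = U2) A = []" "filter (\<lambda>s. s = U2) B = []"
    using assms by (auto simp: filter_empty_conv)
  then show ?thesis by simp
qed

lemma Phi_in: assumes "p \<in> Sig" shows "Phi p \<in> Sigma UNIV (\<lambda>(n,m). gpaths n m)"
proof -
  obtain h A B where p: "p = (h, A, B)" and A: "A \<in> Pre h" and B: "B \<in> S (Suc h)"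
    using assms by (auto simp: Sig_def)
  have A': "U2 \<notin> set A" "pth 0 0 A (int h)" using A Pre_char by auto
  have B': "U2 \<notin> set B" "pth 0 (int h + 1) B 0" using B by (auto simp: S_def add.commute)
  have "pth 0 (int h) (U2 # B) 0" using B' by simp
  then have dy: "is_dyck (A @ U2 # B)" unfolding is_dyck_pth pth_append using A' by blast
  have tk: "take (Suc (length A)) (A @ U2 # B) = A @ [U2]" by simp
  have nu: "num_up (A @ [U2]) = ups A + 1" using num_up_noU2[OF A'(1)] by (simp add: num_up_def)
  show ?thesis unfolding p Phi_def gpaths_def
    using dy filter_U2_count[OF A'(1) B'(1)] tk nu by simp
qed

lemma Phi_inj: "inj_on Phi Sig"
proof (rule inj_onI)
  fix p q assume p: "p \<in> Sig" and q: "q \<in> Sig" and e: "Phi p = Phi q"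
  obtain h A B where p': "p = (h, A, B)" and A: "A \<in> Pre h" using p by (auto simp: Sig_def)
  obtain h' A' B' where q': "q = (h', A', B')" and A': "A' \<in> Pre h'" using q by (auto simp: Sig_def)
  have "A @ U2 # B = A' @ U2 # B'" "length A = length A'" using e p' q' by (auto simp: Phi_def)
  then have AB: "A = A'" "B = B'" by auto
  have "pth 0 0 A (int h)" "pth 0 0 A (int h')" using A A' AB Pre_char by auto
  then have "int h = int h'" using pth_det[of 0 0 A "int h"] pth_det[of 0 0 A "int h'"] by simp
  then show "p = q" using p' q' AB by simp
qed

lemma Phi_surj: "Sigma UNIV (\<lambda>(n,m). gpaths n m) \<subseteq> Phi ` Sig"
proof
  fix y assume y: "y \<in> Sigma UNIV (\<lambda>(n,m). gpaths n m)"
  obtain n m w i where y': "y = ((n,m),(w,i))" and g: "(w,i) \<in> gpaths n m" using y by auto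
  have len: "length w = n" and dy: "is_dyck w" and cnt: "length (filter (\<lambda>s. s = U2) w) = 1"
    and il: "i < length w" and wi: "w ! i = U2" and nu: "num_up (take (Suc i) w) = m"
    using g by (auto simp: gpaths_def)
  define A where "A = take i w"
  define B where "B = drop (Suc i) w"
  have w: "w = A @ U2 # B" using il wi unfolding A_def B_def by (metis id_take_nth_drop)
  have "length (filter (\<lambda>s. s = U2) A) + 1 + length (filter (\<lambda>s. s = U2) B) = 1"
    using cnt unfolding w by simp
  then have "filter (\<lambda>s. s = U2) A = []" "filter (\<lambda>s. s = U2) B = []" by auto
  then have nA: "U2 \<notin> set A" and nB: "U2 \<notin> set B" by (auto simp: filter_empty_conv)
  have "pth 0 0 (A @ U2 # B) 0" using dy w is_dyck_pth by simp
  then obtain c where c1: "pth 0 0 A c" and c2: "pth 0 c (U2 # B) 0" by (auto simp: pth_append)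
  have c0: "0 \<le> c" using pth_end[OF c1] by auto
  define h where "h = nat c"
  have hc: "int h = c" using c0 by (simp add: h_def)
  have AP: "A \<in> Pre h" using Pre_char nA c1 hc by simp
  have BS: "B \<in> S (Suc h)" using nB c2 hc by (simp add: S_def add.commute)
  have lA: "length A = i" using il by (simp add: A_def)
  have "take (Suc i) w = A @ [U2]" using w lA by simp
  then have m: "m = ups A + 1" using nu num_up_noU2[OF nA] by (simp add: num_up_def)
  have "Phi (h, A, B) = y" unfolding Phi_def y' using w lA len m by auto
  moreover have "(h, A, B) \<in> Sig" using AP BS by (simp add: Sig_def)
  ultimately show "y \<in> Phi ` Sig" by blast
qed

lemma Phi_image: "Phi ` Sig = Sigma UNIV (\<lambda>(n,m). gpaths n m)"
  using Phi_in Phi_surj by blast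


lemma WE_rc: "WE \<alpha> \<beta> (rc w) = WE \<beta> \<alpha> w" by (simp add: WE_def)

definition fg :: "real \<Rightarrow> real \<Rightarrow> (nat \<times> nat) \<times> (step list \<times> nat) \<Rightarrow> real" where
  "fg z x = (\<lambda>((n,m),(w,i)). real (Suc i) * z ^ n * x ^ m)"

lemma alg_final:
  fixes q a c cx ex t s \<rho> K :: real
  assumes c: "c = 1 + a * c^2" and cx: "cx = 1 + q * cx^2" and ex: "ex * t = cx"
    and t: "t = 1 - 2 * q * cx" and s: "s = 1 - 2 * a * c" and tpos: "t \<noteq> 0"
    and \<rho>: "\<rho> = q * cx * c" and \<rho>1: "\<rho> \<noteq> 1" and K: "K = q * ex * c^2"
  shows "K / (1 - \<rho>)^2 = 2 * (1 - t) / (t * (s + t)^2)"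
proof -
  have c0: "c \<noteq> 0" using c by auto
  have st: "c * (s + t) = 2 * (1 - \<rho>)" using c s t \<rho> by algebra
  have st0: "s + t \<noteq> 0" using st \<rho>1 by auto
  have "c^2 * (K * (t * (s + t)^2)) = c^2 * (2 * (1 - t) * (1 - \<rho>)^2)"
  proof -
    have "c^2 * (K * (t * (s + t)^2)) = q * (ex * t) * c^2 * (c * (s + t))^2"
      using K by (simp add: power2_eq_square algebra_simps)
    also have "\<dots> = q * cx * c^2 * (2 * (1 - \<rho>))^2" using ex st by simp
    also have "\<dots> = c^2 * (2 * (1 - t) * (1 - \<rho>)^2)" using t by algebra
    finally show ?thesis .
  qed
  then have e: "K * (t * (s + t)^2) = 2 * (1 - t) * (1 - \<rho>)^2" using c0 by simp
  have "1 - \<rho> \<noteq> 0" using \<rho>1 by simp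
  then show ?thesis using e tpos st0 by (simp add: frac_eq_eq)
qed

context
  fixes z x :: real
  assumes zx: "\<bar>z\<bar> < 1/8" "\<bar>x\<bar> < 1/8"
begin

lemma xz_small: "\<bar>x * z\<bar> \<le> 1/8"
proof -
  have "\<bar>x * z\<bar> = \<bar>x\<bar> * \<bar>z\<bar>" by (simp add: abs_mult)
  also have "\<dots> \<le> 1 * (1/8)" using zx by (intro mult_mono) auto
  finally show ?thesis by simp
qed

lemma zz: "\<bar>z\<bar> \<le> 1/8" using zx by simp

lemma fg_Phi:
  assumes "(h, A, B) \<in> Sig"
  shows "fg z x (Phi (h, A, B)) = x * z * (WE (x * z) z A * W z z B)"
proof -
  have nA: "U2 \<notin> set A" and nB: "U2 \<notin> set B" using assms Pre_char by (auto simp: Sig_def S_def)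
  have lA: "length A = ups A + dns A" and lB: "length B = ups B + dns B"
    using ups_dns_len[OF nA] ups_dns_len[OF nB] by auto
  have "fg z x (Phi (h, A, B)) = real (Suc (length A)) * z ^ (length A + 1 + length B) * x ^ (ups A + 1)"
    by (simp add: fg_def Phi_def)
  also have "\<dots> = x * z * (WE (x * z) z A * W z z B)"
    unfolding WE_def W_def lA lB by (simp add: power_add power_mult_distrib algebra_simps)
  finally show ?thesis .
qed

lemma fg_bound:
  assumes "(h, A, B) \<in> Sig"
  shows "\<bar>fg z x (Phi (h, A, B))\<bar> \<le> M (A @ U2 # B)"
proof -
  define n where "n = length A + 1 + length B"
  have "\<bar>fg z x (Phi (h, A, B))\<bar> = real (Suc (length A)) * \<bar>z\<bar> ^ n * \<bar>x\<bar> ^ (ups A + 1)"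
    unfolding fg_def Phi_def n_def by (simp add: abs_mult power_abs)
  also have "\<dots> \<le> real (Suc n) * (1/8) ^ n * 1"
    using zx by (intro mult_mono power_mono power_le_one) (auto simp: n_def)
  also have "\<dots> \<le> 2 ^ n * (1/8) ^ n" using pow_le_2[of n] by simp
  also have "\<dots> = M (A @ U2 # B)" by (simp add: M_def n_def power_mult_distrib[symmetric])
  finally show ?thesis .
qed

lemma Sig_summable: "(fg z x \<circ> Phi) summable_on Sig"
proof -
  define \<pi> where "\<pi> = (\<lambda>(h::nat, A, B). A @ U2 # B)"
  have inj: "inj_on \<pi> Sig"
  proof (rule inj_onI)
    fix p q assume p: "p \<in> Sig" and q: "q \<in> Sig" and e: "\<pi> p = \<pi> q"
    obtain h A B where p': "p = (h, A, B)" and A: "A \<in> Pre h" using p by (auto simp: Sig_def)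
    obtain h' A' B' where q': "q = (h', A', B')" and A': "A' \<in> Pre h'" using q by (auto simp: Sig_def)
    have "A @ U2 # B = A' @ U2 # B'" using e p' q' by (simp add: \<pi>_def)
    then have AB: "A = A'" "B = B'" using split_U2_unique A A' Pre_char by blast+
    have "pth 0 0 A (int h)" "pth 0 0 A (int h')" using A A' AB Pre_char by auto
    then have "int h = int h'" using pth_det[of 0 0 A "int h"] pth_det[of 0 0 A "int h'"] by simp
    then show "p = q" using p' q' AB by simp
  qed
  have "M summable_on (\<pi> ` Sig)" by (rule M_summable_on)
  then have "(M \<circ> \<pi>) summable_on Sig" using summable_on_reindex[OF inj] by blast
  then show ?thesis
    by (rule summable_dom) (use fg_bound in \<open>auto simp: \<pi>_def\<close>)
qed

lemma Pre_WE_has: "(WE (x * z) z has_sum eS z (x * z) h) (Pre h)"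
proof -
  have "(WE z (x * z) has_sum eS z (x * z) h) (S h)" by (rule eS_has[OF zz xz_small])
  then have "((WE (x * z) z \<circ> rc) has_sum eS z (x * z) h) (S h)"
    by (simp add: comp_def WE_rc)
  moreover have "inj_on rc (S h)" by (metis inj_on_inverseI rc_rc)
  ultimately show ?thesis unfolding Pre_def by (simp add: has_sum_reindex)
qed

lemma Pre_WE_abs: "(\<lambda>A. \<bar>WE (x * z) z A\<bar>) summable_on (Pre h)"
  by (rule abs_dom[OF M_summable_on]) (use WE_bound[OF xz_small zz] Pre_char in \<open>auto simp: WE_def\<close>)

lemma inner_has:
  "((\<lambda>y. (fg z x \<circ> Phi) (h, y)) has_sum (x * z * (eS z (x * z) h * cS z z (Suc h)))) (Pre h \<times> S (Suc h))"
proof -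
  have "((\<lambda>(A, B). WE (x * z) z A * W z z B) has_sum (eS z (x * z) h * cS z z (Suc h))) (Pre h \<times> S (Suc h))"
    by (rule has_sum_times[OF Pre_WE_has cS_has[OF zz zz] Pre_WE_abs W_abs_summ[OF zz zz]])
  then have "((\<lambda>p. x * z * (case p of (A, B) \<Rightarrow> WE (x * z) z A * W z z B)) has_sum
      (x * z * (eS z (x * z) h * cS z z (Suc h)))) (Pre h \<times> S (Suc h))"
    by (rule has_sum_cmult_right)
  then show ?thesis
    by (rule has_sum_cong[THEN iffD1, rotated]) (auto simp: fg_Phi Sig_def)
qed


lemma outer_has: "((\<lambda>h. x * z * (eS z (x * z) h * cS z z (Suc h))) has_sum Gclosed z x) UNIV"
proof -
  define c where "c = cS z z 0"
  define cx where "cx = cS z (x * z) 0"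
  define ex where "ex = eS z (x * z) 0"
  define \<rho> where "\<rho> = z * (x * z) * cx * c"
  define K where "K = z * (x * z) * ex * c^2"
  have V: "x * z * (eS z (x * z) h * cS z z (Suc h)) = K * (of_nat (Suc h) * \<rho> ^ h)" for h
  proof -
    have "x * z * (eS z (x * z) h * cS z z (Suc h)) =
          x * z * ((real (h + 1) * (x * z) ^ h * cx ^ h * ex) * (z ^ Suc h * c ^ (Suc h + 1)))"
      using eS_closed[OF zz xz_small, of h] cS_closed[OF zz zz, of "Suc h"]
      by (simp add: c_def cx_def ex_def)
    also have "\<dots> = K * (of_nat (Suc h) * \<rho> ^ h)"
      by (simp add: K_def \<rho>_def power_mult_distrib power2_eq_square algebra_simps)
    finally show ?thesis .
  qed
  have cb: "\<bar>c\<bar> \<le> 4" "\<bar>cx\<bar> \<le> 4" using c_bound[OF zz zz] c_bound[OF zz xz_small] by (auto simp: c_def cx_def)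
  have "\<bar>\<rho>\<bar> = \<bar>z\<bar> * \<bar>x * z\<bar> * \<bar>cx\<bar> * \<bar>c\<bar>" by (simp add: \<rho>_def abs_mult)
  also have "\<dots> \<le> (1/8) * (1/8) * 4 * 4" using cb zz xz_small
    by (intro mult_mono) auto
  finally have \<rho>b: "\<bar>\<rho>\<bar> < 1" by simp
  have sm: "(\<lambda>n. of_nat (Suc n) * \<rho> ^ n) sums (1 / (1 - \<rho>)^2)"
    using geometric_deriv_sums[of \<rho>] \<rho>b by simp
  have "summable (\<lambda>n. of_nat (Suc n) * \<bar>\<rho>\<bar> ^ n :: real)"
    using geometric_deriv_sums[of "\<bar>\<rho>\<bar>"] \<rho>b by (simp add: sums_summable)
  then have "summable (\<lambda>n. norm (of_nat (Suc n) * \<rho> ^ n :: real))"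
    by (simp add: abs_mult power_abs)
  then have "((\<lambda>n. of_nat (Suc n) * \<rho> ^ n) has_sum (1 / (1 - \<rho>)^2)) UNIV"
    using sm by (rule norm_summable_imp_has_sum)
  then have hs: "((\<lambda>n. K * (of_nat (Suc n) * \<rho> ^ n)) has_sum K * (1 / (1 - \<rho>)^2)) UNIV"
    by (rule has_sum_cmult_right)
  have s1: "1 - 2 * z * z * c = sqrt (1 - 4 * z * z)" using c_sqrt[OF zz zz] by (simp add: c_def)
  have t1: "1 - 2 * z * (x * z) * cx = sqrt (1 - 4 * z * (x * z))"
    using c_sqrt[OF zz xz_small] by (simp add: cx_def)
  have q1: "c = 1 + (z * z) * c^2" using c_quad[OF zz zz] by (simp add: c_def)
  have q2: "cx = 1 + (z * (x * z)) * cx^2" using c_quad[OF zz xz_small] by (simp add: cx_def mult.assoc)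
  have q3: "ex * (1 - 2 * (z * (x * z)) * cx) = cx" using e_eq[OF zz xz_small] by (simp add: cx_def ex_def mult.assoc)
  have pos: "0 < 1 - 4 * z * (x * z)"
  proof -
    have "\<bar>4 * z * (x * z)\<bar> = 4 * \<bar>z\<bar> * \<bar>x * z\<bar>" by (simp add: abs_mult)
    also have "\<dots> \<le> 4 * (1/8) * (1/8)" using zz xz_small by (intro mult_mono) auto
    finally show ?thesis by simp
  qed
  have t0: "sqrt (1 - 4 * z * (x * z)) \<noteq> 0" using pos by simp
  have G: "Gclosed z x = 2 * (1 - sqrt (1 - 4 * z * (x * z))) /
      (sqrt (1 - 4 * z * (x * z)) * (sqrt (1 - 4 * z * z) + sqrt (1 - 4 * z * (x * z)))^2)"
    unfolding Gclosed_def by (simp add: power2_eq_square mult_ac)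
  have "K / (1 - \<rho>)^2 = 2 * (1 - sqrt (1 - 4 * z * (x * z))) /
      (sqrt (1 - 4 * z * (x * z)) * (sqrt (1 - 4 * z * z) + sqrt (1 - 4 * z * (x * z)))^2)"
  proof (rule alg_final[where q = "z * (x * z)" and a = "z * z" and c = c and cx = cx and ex = ex])
    show "c = 1 + z * z * c^2" using q1 by simp
    show "cx = 1 + z * (x * z) * cx^2" using q2 by simp
    show "sqrt (1 - 4 * z * (x * z)) = 1 - 2 * (z * (x * z)) * cx" using t1 by (simp add: mult.assoc)
    show "sqrt (1 - 4 * z * z) = 1 - 2 * (z * z) * c" using s1 by (simp add: mult.assoc)
    show "sqrt (1 - 4 * z * (x * z)) \<noteq> 0" by (rule t0)
    show "ex * sqrt (1 - 4 * z * (x * z)) = cx" using q3 t1 by (simp add: mult.assoc)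
    show "\<rho> = z * (x * z) * cx * c" by (simp add: \<rho>_def)
    show "\<rho> \<noteq> 1" using \<rho>b by auto
    show "K = z * (x * z) * ex * c^2" by (simp add: K_def)
  qed
  then have "K * (1 / (1 - \<rho>)^2) = Gclosed z x" using G by simp
  then show ?thesis using hs V by simp
qed

lemma joint_Sig: "((fg z x \<circ> Phi) has_sum Gclosed z x) Sig"
  unfolding Sig_def
  by (rule has_sum_SigmaI[OF inner_has outer_has Sig_summable[unfolded Sig_def]])

lemma gpaths_finite: "finite (gpaths n m)"
proof (rule finite_subset)
  show "gpaths n m \<subseteq> {w. length w \<le> n} \<times> {..<n}" by (auto simp: gpaths_def)
  show "finite ({w :: step list. length w \<le> n} \<times> {..<n})" using finite_len_le by simp
qed

lemma part1: "((\<lambda>(n, m). real (g n m) * z ^ n * x ^ m) has_sum Gclosed z x) UNIV"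
proof -
  have t: "(fg z x has_sum Gclosed z x) (Sigma UNIV (\<lambda>(n,m). gpaths n m))"
    using joint_Sig has_sum_reindex[OF Phi_inj] Phi_image by metis
  show ?thesis
  proof (rule has_sum_Sigma'[OF t])
    fix nm :: "nat \<times> nat"
    obtain n m where nm: "nm = (n, m)" by (cases nm)
    have "(\<Sum>p\<in>gpaths n m. fg z x ((n, m), p)) = (\<Sum>p\<in>gpaths n m. real (case p of (w, i) \<Rightarrow> Suc i)) * z ^ n * x ^ m"
      by (simp add: fg_def sum_distrib_right case_prod_beta)
    also have "\<dots> = real (g n m) * z ^ n * x ^ m" by (simp add: g_def)
    finally have "((\<lambda>p. fg z x ((n, m), p)) has_sum real (g n m) * z ^ n * x ^ m) (gpaths n m)"
      by (intro has_sum_finiteI gpaths_finite) simp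
    then show "((\<lambda>y. fg z x (nm, y)) has_sum (case nm of (n, m) \<Rightarrow> real (g n m) * z ^ n * x ^ m))
       (case nm of (n, m) \<Rightarrow> gpaths n m)" using nm by simp
  qed
qed

end

lemma map_poly_add_hom:
  assumes "\<And>a b. f (a + b) = f a + f b" "f 0 = 0"
  shows "map_poly f (p + q) = map_poly f p + map_poly f q"
  by (intro poly_eqI) (simp add: coeff_map_poly assms)

lemma map_poly_mult_hom:
  assumes add: "\<And>a b. f (a + b) = f a + f b" and z: "f 0 = 0" and mul: "\<And>a b. f (a * b) = f a * f b"
  shows "map_poly f (p * q) = map_poly f p * map_poly f q"
proof (induction p)
  case 0 then show ?case by simp
next
  case (pCons a p)
  have "map_poly f (pCons a p * q) = map_poly f (smult a q) + map_poly f (pCons 0 (p * q))"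
    by (simp add: map_poly_add_hom[where f=f, OF add z])
  also have "\<dots> = smult (f a) (map_poly f q) + pCons 0 (map_poly f p * map_poly f q)"
    using pCons.IH by (simp add: map_poly_smult[where f=f, OF z mul] map_poly_pCons[where f=f, OF z] z)
  also have "\<dots> = map_poly f (pCons a p) * map_poly f q"
    by (simp add: map_poly_pCons[where f=f, OF z])
  finally show ?case .
qed

definition ev2 :: "real poly poly \<Rightarrow> real \<Rightarrow> real \<Rightarrow> real" where
  "ev2 q z x = poly (map_poly (\<lambda>c. poly c x) q) z"

lemma ev2_add[simp]: "ev2 (p + q) z x = ev2 p z x + ev2 q z x"
  unfolding ev2_def by (subst map_poly_add_hom) auto
lemma ev2_mult[simp]: "ev2 (p * q) z x = ev2 p z x * ev2 q z x"
  unfolding ev2_def by (subst map_poly_mult_hom) auto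
lemma ev2_0[simp]: "ev2 0 z x = 0" by (simp add: ev2_def)
lemma ev2_1[simp]: "ev2 1 z x = 1" by (simp add: ev2_def)
lemma ev2_minus[simp]: "ev2 (- p) z x = - ev2 p z x"
proof -
  have "ev2 (- p) z x + ev2 p z x = 0" using ev2_add[of "- p" p z x, symmetric] by simp
  then show ?thesis by linarith
qed
lemma ev2_diff[simp]: "ev2 (p - q) z x = ev2 p z x - ev2 q z x"
  using ev2_add[of p "- q" z x] by simp
lemma ev2_numeral[simp]: "ev2 (numeral n) z x = numeral n"
  by (simp add: ev2_def numeral_poly map_poly_pCons)
lemma ev2_power[simp]: "ev2 (p ^ k) z x = ev2 p z x ^ k"
  by (induction k) auto

lemma eval3_pCons[simp]: "eval3 (pCons a P) z x y = ev2 a z x + y * eval3 P z x y"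
  unfolding eval3_def ev2_def by (subst map_poly_pCons) auto
lemma eval3_0[simp]: "eval3 0 z x y = 0" by (simp add: eval3_def)

definition Sp :: "real poly poly" where "Sp = [: [:1:], 0, [:-4:] :]"
definition Tp :: "real poly poly" where "Tp = [: [:1:], 0, [:0, -4:] :]"

lemma ev2_Sp[simp]: "ev2 Sp z x = 1 - 4 * z^2"
  by (simp add: ev2_def Sp_def map_poly_pCons power2_eq_square)
lemma ev2_Tp[simp]: "ev2 Tp z x = 1 - 4 * x * z^2"
  by (simp add: ev2_def Tp_def map_poly_pCons power2_eq_square algebra_simps)

definition e0p where "e0p = 4 - 4 * Tp"
definition e1p where "e1p = - 4 * Tp * (Sp + Tp)"
definition e2p where "e2p = 4 * Tp^2 * Sp - Tp * (Sp + Tp)^2"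

definition Pmin :: "real poly poly poly" where
  "Pmin = [: e0p^2, 2 * e0p * e1p, e1p^2 + 2 * e0p * e2p - 64 * Tp^2 * Sp, 2 * e1p * e2p, e2p^2 :]"

lemma eval3_Pmin: "eval3 Pmin z x y =
   (ev2 e0p z x + ev2 e1p z x * y + ev2 e2p z x * y^2)^2 - 64 * y^2 * (1 - 4*x*z^2)^2 * (1 - 4*z^2)"
  by (simp add: Pmin_def power2_eq_square algebra_simps)

lemma e2p_nz: "e2p^2 \<noteq> 0"
proof
  assume "e2p^2 = 0"
  then have "ev2 (e2p^2) (1/4) 0 = 0" by simp
  then show False by (simp add: e2p_def power2_eq_square)
qed

lemma degree_Pmin: "degree Pmin = 4"
  using e2p_nz by (simp add: Pmin_def)

lemma Pmin_nz: "Pmin \<noteq> 0"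
  using degree_Pmin by auto

lemma Pmin_root:
  assumes "\<bar>z\<bar> < 1/8" "\<bar>x\<bar> < 1/8"
  shows "eval3 Pmin z x (Gclosed z x) = 0"
proof -
  define S T where "S = 1 - 4*z^2" and "T = 1 - 4*x*z^2"
  have z2: "z^2 < 1/64"
    using power_strict_mono[of "\<bar>z\<bar>" "1/8" 2] assms(1) by (simp add: power2_abs power2_eq_square)
  have z20: "0 \<le> z^2" by simp
  have Sp: "S > 0" using z2 by (simp add: S_def)
  have "\<bar>x\<bar> * z^2 \<le> 1/8 * (1/64)" using assms(2) z2 z20 by (intro mult_mono) auto
  then have "\<bar>4 * x * z^2\<bar> < 1" by (simp add: abs_mult)
  then have Tp: "T > 0" unfolding T_def by linarith
  define s t where "s = sqrt S" and "t = sqrt T"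
  have s2: "s^2 = S" and t2: "t^2 = T" using Sp Tp by (auto simp: s_def t_def)
  have sp: "s > 0" and tp: "t > 0" using Sp Tp by (auto simp: s_def t_def)
  define y where "y = Gclosed z x"
  have y: "y = 2 * (1 - t) / (t * (s + t)^2)" by (simp add: y_def Gclosed_def s_def t_def S_def T_def)
  have yeq: "y * t * (s + t)^2 = 2 * (1 - t)" using y sp tp by (simp add: field_simps)
  have e1: "t * (y * (S + T) + 2) = 2 - 2 * y * T * s"
    using yeq s2 t2 by algebra
  have e2: "T * (y * (S + T) + 2)^2 = (2 - 2 * y * T * s)^2"
    using e1 t2 by algebra
  have e3: "(4 - 4*T) + (- 4 * T * (S + T)) * y + (4 * T^2 * S - T * (S + T)^2) * y^2 = 8 * y * T * s"
    using e2 s2 by algebra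
  have "((4 - 4*T) + (- 4 * T * (S + T)) * y + (4 * T^2 * S - T * (S + T)^2) * y^2)^2 - 64 * y^2 * T^2 * S = 0"
    using e3 s2 by algebra
  then show ?thesis
    unfolding eval3_Pmin y_def[symmetric] S_def T_def by (simp add: e0p_def e1p_def e2p_def, algebra)
qed

definition ev2c :: "real poly poly \<Rightarrow> complex \<Rightarrow> complex \<Rightarrow> complex" where
  "ev2c q z x = poly (map_poly (\<lambda>c. poly (map_poly of_real c) x) q) z"
definition eval3c :: "real poly poly poly \<Rightarrow> complex \<Rightarrow> complex \<Rightarrow> complex \<Rightarrow> complex" where
  "eval3c Q z x y = poly (map_poly (\<lambda>q. ev2c q z x) Q) y"

lemma poly_of_real_hom:
  assumes "h 0 = 0"
  shows "poly (map_poly (\<lambda>c. complex_of_real (h c)) p) (of_real a) = of_real (poly (map_poly h p) a)"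
proof (induction p)
  case 0 then show ?case by simp
next
  case (pCons c p)
  have "map_poly (\<lambda>c. complex_of_real (h c)) (pCons c p) = pCons (of_real (h c)) (map_poly (\<lambda>c. complex_of_real (h c)) p)"
    by (rule map_poly_pCons) (simp add: assms)
  moreover have "map_poly h (pCons c p) = pCons (h c) (map_poly h p)"
    by (rule map_poly_pCons) (simp add: assms)
  ultimately show ?case using pCons.IH by simp
qed

lemma ev2c_real: "ev2c q (of_real z) (of_real x) = of_real (ev2 q z x)"
proof -
  have i: "poly (map_poly of_real c) (complex_of_real x) = of_real (poly c x)" for c :: "real poly"
    using poly_of_real_hom[of "\<lambda>c. c" c x] by simp
  show ?thesis unfolding ev2c_def ev2_def i
    by (rule poly_of_real_hom) simp
qed

lemma eval3c_real: "eval3c Q (of_real z) (of_real x) (of_real y) = of_real (eval3 Q z x y)"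
  unfolding eval3c_def eval3_def ev2c_real ev2_def[symmetric]
  by (rule poly_of_real_hom) (simp add: ev2_def)

lemma poly_sum_N:
  fixes p :: "complex poly"
  assumes "degree p \<le> N"
  shows "poly p y = (\<Sum>i\<le>N. coeff p i * y ^ i)"
proof -
  have "poly p y = (\<Sum>i\<le>degree p. coeff p i * y ^ i)" by (rule poly_altdef)
  also have "\<dots> = (\<Sum>i\<le>N. coeff p i * y ^ i)"
    by (rule sum.mono_neutral_left) (use assms in \<open>auto simp: coeff_eq_0\<close>)
  finally show ?thesis .
qed

lemma hol_poly:
  fixes p :: "complex \<Rightarrow> complex poly"
  assumes "\<And>i. (\<lambda>u. coeff (p u) i) holomorphic_on Sx" "\<And>u. u \<in> Sx \<Longrightarrow> degree (p u) \<le> N"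
    and "gg holomorphic_on Sx"
  shows "(\<lambda>u. poly (p u) (gg u)) holomorphic_on Sx"
proof -
  have "(\<lambda>u. \<Sum>i\<le>N. coeff (p u) i * gg u ^ i) holomorphic_on Sx"
    using assms by (intro holomorphic_intros) auto
  then show ?thesis by (rule holomorphic_transform) (metis poly_sum_N assms(2))
qed

lemma degree_map_poly_le': "degree (map_poly f p) \<le> degree p"
  by (rule map_poly_degree_leq)

lemma hol_ev2c:
  assumes "a holomorphic_on Sx" "b holomorphic_on Sx"
  shows "(\<lambda>u. ev2c q (a u) (b u)) holomorphic_on Sx"
  unfolding ev2c_def
proof (rule hol_poly[OF _ _ assms(1), where N = "degree q"])
  fix i
  have c: "coeff (map_poly (\<lambda>c. poly (map_poly complex_of_real c) (b u)) q) i
      = poly (map_poly complex_of_real (coeff q i)) (b u)" for u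
    by (simp add: coeff_map_poly)
  show "(\<lambda>u. coeff (map_poly (\<lambda>c. poly (map_poly complex_of_real c) (b u)) q) i) holomorphic_on Sx"
    unfolding c by (rule hol_poly[OF _ _ assms(2), where N = "degree (coeff q i)"])
      (auto intro: degree_map_poly_le')
qed (rule degree_map_poly_le')

lemma hol_eval3c:
  assumes "a holomorphic_on Sx" "b holomorphic_on Sx" "c holomorphic_on Sx"
  shows "(\<lambda>u. eval3c Q (a u) (b u) (c u)) holomorphic_on Sx"
  unfolding eval3c_def
proof (rule hol_poly[OF _ _ assms(3), where N = "degree Q"])
  fix i
  have e: "coeff (map_poly (\<lambda>q. ev2c q (a u) (b u)) Q) i = ev2c (coeff Q i) (a u) (b u)" for u
    by (simp add: coeff_map_poly ev2c_def)
  show "(\<lambda>u. coeff (map_poly (\<lambda>q. ev2c q (a u) (b u)) Q) i) holomorphic_on Sx"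
    unfolding e by (rule hol_ev2c[OF assms(1,2)])
qed (rule degree_map_poly_le')

lemma cont_real:
  fixes F :: "complex \<Rightarrow> complex"
  assumes hol: "F holomorphic_on \<Omega>" and op: "open \<Omega>" and co: "connected \<Omega>"
    and u0: "complex_of_real u0 \<in> \<Omega>" and ev: "eventually (\<lambda>u. F (of_real u) = 0) (at u0)"
    and w: "w \<in> \<Omega>"
  shows "F w = 0"
proof -
  obtain r where r: "r > 0" "ball (complex_of_real u0) r \<subseteq> \<Omega>" using op u0 openE by blast
  obtain d where d: "d > 0" "\<And>u. u \<noteq> u0 \<Longrightarrow> dist u u0 < d \<Longrightarrow> F (of_real u) = 0"
    using ev unfolding eventually_at by blast
  define U where "U = {complex_of_real u | u. u \<noteq> u0 \<and> dist u u0 < min d r}"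
  have UO: "U \<subseteq> \<Omega>"
  proof
    fix v assume "v \<in> U"
    then obtain u where "v = of_real u" "dist u u0 < r" by (auto simp: U_def)
    then have "v \<in> ball (complex_of_real u0) r" by (simp add: dist_norm dist_commute norm_of_real flip: of_real_diff)
    then show "v \<in> \<Omega>" using r by blast
  qed
  have lim: "complex_of_real u0 islimpt U"
  proof (rule islimpt_approachable[THEN iffD2], intro allI impI)
    fix e :: real assume e: "e > 0"
    define u where "u = u0 + min e (min d r) / 2"
    have pos: "min e (min d r) > 0" using e d r by simp
    have "u \<noteq> u0" "dist u u0 < min d r" "dist u u0 < e" using pos by (auto simp: u_def dist_real_def)
    then have "complex_of_real u \<in> U" "complex_of_real u \<noteq> of_real u0" "dist (complex_of_real u) (of_real u0) < e"
      by (auto simp: U_def dist_norm norm_of_real dist_real_def simp flip: of_real_diff)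
    then show "\<exists>x'\<in>U. x' \<noteq> complex_of_real u0 \<and> dist x' (complex_of_real u0) < e" by blast
  qed
  show ?thesis
  proof (rule analytic_continuation[OF hol op co UO u0 lim _ w])
    fix v assume "v \<in> U"
    then obtain u where "v = of_real u" "u \<noteq> u0" "dist u u0 < d" by (auto simp: U_def)
    then show "F v = 0" using d by auto
  qed
qed

lemma conn_cofinite:
  fixes T :: "complex set"
  assumes "finite T"
  shows "open (UNIV - T)" "connected (UNIV - T)"
proof -
  show "open (UNIV - T)" using assms by (simp add: finite_imp_closed open_Diff)
  show "connected (UNIV - T)"
    by (rule connected_open_diff_countable) (use assms in \<open>auto simp: countable_finite\<close>)
qed

lemma one_plus_sq: "1 + w^2 = 0 \<longleftrightarrow> w = \<i> \<or> w = - \<i>"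
proof -
  have "1 + w^2 = (w - \<i>) * (w + \<i>)" by (simp add: algebra_simps power2_eq_square)
  then have "1 + w^2 = 0 \<longleftrightarrow> w - \<i> = 0 \<or> w + \<i> = 0" by simp
  then show ?thesis by (simp add: eq_neg_iff_add_eq_0)
qed

lemma quad_roots_finite:
  fixes a b :: complex
  assumes "a \<noteq> 0"
  shows "finite {w. a + b * w^2 = 0}"
proof -
  have "{w. a + b * w^2 = 0} = {w. poly [:a, 0, b:] w = 0}" by (simp add: power2_eq_square algebra_simps)
  moreover have "[:a, 0, b:] \<noteq> 0" using assms by simp
  ultimately show ?thesis using poly_roots_finite by metis
qed

lemma param:
  fixes a :: real
  assumes "0 < a" "a < 1/2"
  obtains u where "0 < u" "u < 1" "u / (1 + u^2) = a" "(1 - u^2) / (1 + u^2) = sqrt (1 - 4 * a^2)"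
proof -
  define r where "r = sqrt (1 - 4 * a^2)"
  have a2: "4 * a^2 < 1"
    using power_strict_mono[of a "1/2" 2] assms by (simp add: power2_eq_square)
  have r0: "0 < r" using a2 by (simp add: r_def)
  have r2: "r^2 = 1 - 4 * a^2" using a2 by (simp add: r_def)
  define u where "u = 2 * a / (1 + r)"
  have u0: "0 < u" using assms r0 by (simp add: u_def)
  have u1: "u < 1" using assms r0 by (simp add: u_def field_simps)
  have d: "1 + u^2 = 2 / (1 + r)"
  proof -
    have ur: "u * (1 + r) = 2 * a" using r0 by (simp add: u_def)
    have "(1 + u^2) * (1 + r)^2 = (1 + r)^2 + (u * (1 + r))^2" by algebra
    also have "\<dots> = (1 + r)^2 + 4 * a^2" using ur by (simp add: power2_eq_square)
    also have "\<dots> = 2 * (1 + r)" using r2 by (simp add: power2_eq_square algebra_simps)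
    finally have "((1 + u^2) * (1 + r)) * (1 + r) = 2 * (1 + r)" by (simp add: power2_eq_square mult.assoc)
    then have "(1 + u^2) * (1 + r) = 2" using r0 by (metis mult_right_cancel add_pos_pos zero_less_one less_irrefl)
    then show ?thesis using r0 by (simp add: eq_divide_eq)
  qed
  have "u / (1 + u^2) = a" using r0 unfolding d by (simp add: u_def field_simps)
  moreover have "(1 - u^2) / (1 + u^2) = r"
  proof -
    have "u^2 = 2 / (1 + r) - 1" using d by simp
    then have "1 - u^2 = 2 - 2 / (1 + r)" by simp
    then show ?thesis using r0 unfolding d by (simp add: field_simps)
  qed
  ultimately show ?thesis using that u0 u1 by (simp add: r_def)
qed

lemma sqrt_param:
  fixes u :: real
  assumes "0 \<le> u" "u \<le> 1"
  shows "sqrt (1 - 4 * (u / (1 + u^2))^2) = (1 - u^2) / (1 + u^2)"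
proof (rule real_sqrt_unique)
  have p: "1 + u^2 > 0" by (simp add: add_pos_nonneg)
  have p2: "(1 + u^2)^2 \<noteq> 0" using p by simp
  have "1 - 4 * (u / (1 + u^2))^2 = ((1 + u^2)^2 - 4 * u^2) / (1 + u^2)^2"
    using p2 by (simp add: power_divide field_simps)
  also have "(1 + u^2)^2 - 4 * u^2 = (1 - u^2)^2" by algebra
  finally show "((1 - u^2) / (1 + u^2))^2 = 1 - 4 * (u / (1 + u^2))^2" by (simp add: power_divide)
  have "u^2 \<le> 1" using assms by (simp add: power_le_one)
  then show "0 \<le> (1 - u^2) / (1 + u^2)" using p by simp
qed

lemma bivar_zero:
  fixes q :: "real poly poly"
  assumes "\<And>z x. 0 < z \<Longrightarrow> z < 1/8 \<Longrightarrow> 0 < x \<Longrightarrow> x < 1/8 \<Longrightarrow> ev2 q z x = 0"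
  shows "q = 0"
proof -
  have inf: "infinite {0<..<(1/8::real)}" by simp
  have "map_poly (\<lambda>c. poly c x) q = 0" if x: "0 < x" "x < 1/8" for x
  proof (rule ccontr)
    assume nz: "map_poly (\<lambda>c. poly c x) q \<noteq> 0"
    have "{0<..<(1/8::real)} \<subseteq> {z. poly (map_poly (\<lambda>c. poly c x) q) z = 0}"
      using assms x by (auto simp: ev2_def)
    then show False using poly_roots_finite[OF nz] inf finite_subset by blast
  qed
  then have "poly (coeff q i) x = 0" if "0 < x" "x < 1/8" for i x
    using that by (metis coeff_0 coeff_map_poly poly_0)
  then have "coeff q i = 0" for i
  proof -
    fix i
    show "coeff q i = 0"
    proof (rule ccontr)
      assume nz: "coeff q i \<noteq> 0"
      have "{0<..<(1/8::real)} \<subseteq> {x. poly (coeff q i) x = 0}"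
        using \<open>\<And>i x. 0 < x \<Longrightarrow> x < 1/8 \<Longrightarrow> poly (coeff q i) x = 0\<close> by auto
      then show False using poly_roots_finite[OF nz] inf finite_subset by blast
    qed
  qed
  then show ?thesis by (simp add: poly_eq_iff)
qed

definition Gs :: "real \<Rightarrow> real \<Rightarrow> real \<Rightarrow> real \<Rightarrow> real" where
  "Gs \<sigma> \<tau> z x = 2 * (1 - \<tau> * sqrt (1 - 4*x*z^2)) /
     (\<tau> * sqrt (1 - 4*x*z^2) * (\<sigma> * sqrt (1 - 4*z^2) + \<tau> * sqrt (1 - 4*x*z^2))^2)"

lemma Gs11: "Gs 1 1 z x = Gclosed z x" by (simp add: Gs_def Gclosed_def)

definition EZ :: "real poly poly poly \<Rightarrow> real \<Rightarrow> real \<Rightarrow> bool" where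
  "EZ Q \<sigma> \<tau> \<longleftrightarrow> (\<forall>z x. 0 < z \<longrightarrow> z < 1/8 \<longrightarrow> 0 < x \<longrightarrow> x < 1/8 \<longrightarrow> eval3 Q z x (Gs \<sigma> \<tau> z x) = 0)"

lemma sgn_abs: "\<sigma> \<in> {1, -1::real} \<Longrightarrow> \<bar>\<sigma>\<bar> = 1" by auto

lemma sgn_sum_nz:
  fixes s t \<sigma> \<tau> :: real
  assumes "\<sigma> \<in> {1,-1}" "\<tau> \<in> {1,-1}" "0 < s" "0 < t" "s \<noteq> t"
  shows "\<sigma> * s + \<tau> * t \<noteq> 0"
proof
  assume "\<sigma> * s + \<tau> * t = 0"
  then have "\<bar>\<sigma> * s\<bar> = \<bar>\<tau> * t\<bar>" by (simp add: eq_neg_iff_add_eq_0[symmetric])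
  then have "s = t" using assms by (auto simp: abs_mult)
  then show False using assms by simp
qed

lemma box_facts:
  fixes z x :: real
  assumes "0 < z" "z < 1/8" "0 < x" "x < 1/8"
  shows "0 < x * z^2" "x * z^2 < 1/4" "0 < sqrt (1 - 4*z^2)" "sqrt (1 - 4*z^2) < 1"
    "0 < sqrt (1 - 4 * (x * z^2))" "sqrt (1 - 4 * (x * z^2)) < 1"
    "sqrt (1 - 4*z^2) \<noteq> sqrt (1 - 4 * (x * z^2))" "z < 1/2"
proof -
  have z2: "z^2 < 1/64"
    using power_strict_mono[of z "1/8" 2] assms by (simp add: power2_eq_square)
  have z20: "0 < z^2" using assms by simp
  show q0: "0 < x * z^2" using assms z20 by simp
  have "x * z^2 \<le> 1/8 * (1/64)" using assms z2 z20 by (intro mult_mono) auto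
  then show q1: "x * z^2 < 1/4" by simp
  show "0 < sqrt (1 - 4*z^2)" "sqrt (1 - 4*z^2) < 1" using z2 z20 by auto
  show "0 < sqrt (1 - 4 * (x * z^2))" "sqrt (1 - 4 * (x * z^2)) < 1" using q0 q1 by auto
  show "sqrt (1 - 4*z^2) \<noteq> sqrt (1 - 4 * (x * z^2))"
  proof
    assume "sqrt (1 - 4*z^2) = sqrt (1 - 4 * (x * z^2))"
    then have "1 - 4*z^2 = 1 - 4 * (x * z^2)" by simp
    then have "z^2 * (1 - x) = 0" by (simp add: algebra_simps)
    then show False using z20 assms by simp
  qed
  show "z < 1/2" using assms by simp
qed

lemma one_sq_pos: "0 < 1 + u^2" for u :: real
  by (simp add: add_pos_nonneg)

lemma inv_sq: "u \<noteq> 0 \<Longrightarrow> 1 + (1/u)^2 = (1 + u^2) / u^2" for u :: real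
  by (simp add: field_simps)

lemma zr_inv: "u \<noteq> 0 \<Longrightarrow> (1/u) / (1 + (1/u)^2) = u / (1 + u^2)" for u :: real
  using one_sq_pos[of u] by (simp add: inv_sq field_simps power2_eq_square)
lemma dd: "c \<noteq> 0 \<Longrightarrow> B \<noteq> 0 \<Longrightarrow> (A / c) / (B / c) = A / (B::real)"
  by (simp add: field_simps)

lemma sr_inv: "u \<noteq> 0 \<Longrightarrow> (1 - (1/u)^2) / (1 + (1/u)^2) = - ((1 - u^2) / (1 + u^2))" for u :: real
proof -
  assume u: "u \<noteq> 0"
  have "1 - (1/u)^2 = (u^2 - 1) / u^2" using u by (simp add: field_simps)
  moreover have d: "1 + u^2 \<noteq> 0" using one_sq_pos[of u] by simp
  moreover have "((u^2 - 1) / u^2) / ((1 + u^2) / u^2) = (u^2 - 1) / (1 + u^2)"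
    by (rule dd) (use u d in auto)
  moreover have "(u^2 - 1) / (1 + u^2) = - ((1 - u^2) / (1 + u^2))"
    by (simp add: minus_divide_left)
  ultimately show ?thesis using u by (simp add: inv_sq)
qed
lemma xr_inv: "u \<noteq> 0 \<Longrightarrow> q * (1 + (1/u)^2)^2 / (1/u)^2 = q * (1 + u^2)^2 / u^2" for u q :: real
  using one_sq_pos[of u] by (simp add: inv_sq field_simps power2_eq_square)

lemma flip_s:
  assumes sg: "\<sigma> \<in> {1,-1}" "\<tau> \<in> {1,-1}" and E: "EZ Q \<sigma> \<tau>"
  shows "EZ Q (-\<sigma>) \<tau>"
  unfolding EZ_def
proof (intro allI impI)
  fix z0 x0 :: real
  assume b: "0 < z0" "z0 < 1/8" "0 < x0" "x0 < 1/8"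
  note bf = box_facts[OF b]
  define q where "q = x0 * z0^2"
  define t where "t = sqrt (1 - 4 * q)"
  define s0 where "s0 = sqrt (1 - 4 * z0^2)"
  have q0: "0 < q" and t0: "0 < t" "t < 1" and s0: "0 < s0" "s0 < 1" and st: "s0 \<noteq> t"
    using bf by (auto simp: q_def t_def s0_def)
  obtain u0 where u0: "0 < u0" "u0 < 1" "u0 / (1 + u0^2) = z0" "(1 - u0^2) / (1 + u0^2) = s0"
    using param[of z0] bf b unfolding s0_def by auto
  define Zr where "Zr = (\<lambda>u::real. u / (1 + u^2))"
  define Xr where "Xr = (\<lambda>u::real. q * (1 + u^2)^2 / u^2)"
  define Sr where "Sr = (\<lambda>u::real. (1 - u^2) / (1 + u^2))"
  define Rr where "Rr = (\<lambda>u::real. 2 * (1 - \<tau> * t) / (\<tau> * t * (\<sigma> * Sr u + \<tau> * t)^2))"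
  define F where "F = (\<lambda>w::complex. eval3c Q (w / (1 + w^2)) (of_real q * (1 + w^2)^2 / w^2)
      (2 * (1 - of_real (\<tau> * t)) / (of_real (\<tau> * t) * (of_real \<sigma> * ((1 - w^2) / (1 + w^2)) + of_real (\<tau> * t))^2)))"
  have Freal: "F (of_real u) = of_real (eval3 Q (Zr u) (Xr u) (Rr u))" for u
  proof -
    have "F (of_real u) = eval3c Q (of_real (Zr u)) (of_real (Xr u)) (of_real (Rr u))"
      unfolding F_def Zr_def Xr_def Rr_def Sr_def by simp
    then show ?thesis by (simp add: eval3c_real)
  qed
  have XZ: "Xr u * Zr u ^ 2 = q" if "u \<noteq> 0" for u
  proof -
    have "Xr u * Zr u ^ 2 = q * ((1 + u^2)^2 / u^2 * (u^2 / (1 + u^2)^2))"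
      by (simp add: Xr_def Zr_def power_divide)
    also have "(1 + u^2)^2 / u^2 * (u^2 / (1 + u^2)^2) = 1"
      using that one_sq_pos[of u] by simp
    finally show ?thesis by simp
  qed
  have GR: "Gs \<sigma>' \<tau> (Zr u) (Xr u) = 2 * (1 - \<tau> * t) / (\<tau> * t * (\<sigma>' * Sr u + \<tau> * t)^2)"
    if "0 < u" "u \<le> 1" for u \<sigma>'
  proof -
    have "sqrt (1 - 4 * Zr u ^ 2) = Sr u" using sqrt_param[of u] that by (simp add: Zr_def Sr_def)
    moreover have "sqrt (1 - 4 * Xr u * Zr u ^ 2) = t" using XZ[of u] that by (simp add: t_def mult.assoc)
    ultimately show ?thesis by (simp add: Gs_def)
  qed
  define a where "a = \<sigma> + \<tau> * t"
  define bb where "bb = \<tau> * t - \<sigma>"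
  have a0: "a \<noteq> 0" using sgn_sum_nz[OF sg(1,2), of 1 t] t0 unfolding a_def by auto
  have key: "a + bb * v^2 = (1 + v^2) * (\<sigma> * Sr v + \<tau> * t)" for v :: real
  proof -
    have "1 + v^2 \<noteq> 0" using one_sq_pos[of v] by simp
    then show ?thesis by (simp add: a_def bb_def Sr_def field_simps power2_eq_square)
  qed
  define \<Omega> where "\<Omega> = UNIV - ({0} \<union> {w::complex. 1 + 1 * w^2 = 0} \<union> {w. of_real a + of_real bb * w^2 = 0})"
  have fin: "finite ({0} \<union> {w::complex. 1 + 1 * w^2 = 0} \<union> {w. of_real a + of_real bb * w^2 = 0})"
    using quad_roots_finite[of 1 1] quad_roots_finite[of "of_real a" "of_real bb"] a0 by auto
  have op: "open \<Omega>" and co: "connected \<Omega>" using conn_cofinite[OF fin] unfolding \<Omega>_def by auto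
  have dom: "w \<noteq> 0" "1 + w^2 \<noteq> 0" "of_real \<sigma> * ((1 - w^2) / (1 + w^2)) + of_real (\<tau> * t) \<noteq> 0" if "w \<in> \<Omega>" for w
  proof -
    show "w \<noteq> 0" "1 + w^2 \<noteq> 0" using that by (auto simp: \<Omega>_def)
    have "of_real a + of_real bb * w^2 \<noteq> 0" using that by (auto simp: \<Omega>_def)
    moreover have "of_real a + of_real bb * w^2 = (1 + w^2) * (of_real \<sigma> * ((1 - w^2) / (1 + w^2)) + of_real (\<tau> * t))"
      using \<open>1 + w^2 \<noteq> 0\<close> by (simp add: a_def bb_def field_simps power2_eq_square)
    ultimately show "of_real \<sigma> * ((1 - w^2) / (1 + w^2)) + of_real (\<tau> * t) \<noteq> 0" by auto
  qed
  have tt0: "complex_of_real (\<tau> * t) \<noteq> 0" using sg t0 by auto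
  have hol: "F holomorphic_on \<Omega>"
    unfolding F_def
    by (intro hol_eval3c holomorphic_intros) (use dom tt0 in auto)
  have inreal: "complex_of_real v \<in> \<Omega>" if "v \<noteq> 0" "\<sigma> * Sr v + \<tau> * t \<noteq> 0" for v
  proof -
    have "complex_of_real v \<noteq> 0" using that by simp
    moreover have "1 + (complex_of_real v)^2 \<noteq> 0"
    proof -
      have "1 + v^2 \<noteq> 0" using one_sq_pos[of v] by simp
      then have "complex_of_real (1 + v^2) \<noteq> 0" by (metis of_real_eq_0_iff)
      then show ?thesis by simp
    qed
    moreover have "of_real a + of_real bb * (complex_of_real v)^2 \<noteq> 0"
    proof -
      have "a + bb * v^2 \<noteq> 0" using key[of v] that(2) one_sq_pos[of v] by simp
      then have "complex_of_real (a + bb * v^2) \<noteq> 0" by (metis of_real_eq_0_iff)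
      then show ?thesis by simp
    qed
    ultimately show ?thesis by (auto simp: \<Omega>_def)
  qed
  have u0O: "complex_of_real u0 \<in> \<Omega>"
    using inreal[of u0] u0 sgn_sum_nz[OF sg s0(1) t0(1) st] by (simp add: Sr_def)
  have Sinv: "Sr (1/u0) = - s0" using sr_inv[of u0] u0 by (simp add: Sr_def)
  have w0: "complex_of_real (1/u0) \<in> \<Omega>"
  proof (rule inreal)
    show "1/u0 \<noteq> 0" using u0 by simp
    have "(-\<sigma>) * s0 + \<tau> * t \<noteq> 0" using sgn_sum_nz[OF _ sg(2) s0(1) t0(1) st, of "-\<sigma>"] sg by auto
    then show "\<sigma> * Sr (1/u0) + \<tau> * t \<noteq> 0" using Sinv by simp
  qed
  have tZ: "(Zr \<longlongrightarrow> Zr u0) (at u0)" unfolding Zr_def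
    by (intro tendsto_intros) (use one_sq_pos[of u0] in simp)
  have tX: "(Xr \<longlongrightarrow> Xr u0) (at u0)" unfolding Xr_def
    by (intro tendsto_intros) (use u0 in simp)
  have Zu0: "Zr u0 = z0" using u0 by (simp add: Zr_def)
  have Xu0: "Xr u0 = x0"
  proof -
    have "Xr u0 * z0^2 = x0 * z0^2" using XZ[of u0] u0 Zu0 by (simp add: q_def)
    then show ?thesis using b by simp
  qed
  have ev: "eventually (\<lambda>u. 0 < u \<and> u < 1 \<and> 0 < Zr u \<and> Zr u < 1/8 \<and> 0 < Xr u \<and> Xr u < 1/8) (at u0)"
  proof -
    have "eventually (\<lambda>u. 0 < u) (at u0)" "eventually (\<lambda>u. u < 1) (at u0)"
      using u0 by (auto intro: order_tendstoD[OF tendsto_ident_at])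
    moreover have "eventually (\<lambda>u. 0 < Zr u) (at u0)"
      using order_tendstoD(1)[OF tZ, of 0] Zu0 b by simp
    moreover have "eventually (\<lambda>u. Zr u < 1/8) (at u0)"
      using order_tendstoD(2)[OF tZ, of "1/8"] Zu0 b by simp
    moreover have "eventually (\<lambda>u. 0 < Xr u) (at u0)"
      using order_tendstoD(1)[OF tX, of 0] Xu0 b by simp
    moreover have "eventually (\<lambda>u. Xr u < 1/8) (at u0)"
      using order_tendstoD(2)[OF tX, of "1/8"] Xu0 b by simp
    ultimately show ?thesis by eventually_elim auto
  qed
  have evF: "eventually (\<lambda>u. F (of_real u) = 0) (at u0)"
    using ev
  proof eventually_elim
    case (elim u)
    have "eval3 Q (Zr u) (Xr u) (Gs \<sigma> \<tau> (Zr u) (Xr u)) = 0" using E elim by (auto simp: EZ_def)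
    then show ?case using Freal[of u] GR[of u \<sigma>] elim by (simp add: Rr_def)
  qed
  have "F (complex_of_real (1/u0)) = 0" by (rule cont_real[OF hol op co u0O evF w0])
  then have "complex_of_real (eval3 Q (Zr (1/u0)) (Xr (1/u0)) (Rr (1/u0))) = 0" by (simp only: Freal)
  then have "eval3 Q (Zr (1/u0)) (Xr (1/u0)) (Rr (1/u0)) = 0" by (simp only: of_real_eq_0_iff)
  moreover have "Zr (1/u0) = z0" using zr_inv[of u0] u0 Zu0 by (simp add: Zr_def)
  moreover have "Xr (1/u0) = x0" using xr_inv[of u0 q] u0 Xu0 by (simp add: Xr_def)
  moreover have "Rr (1/u0) = Gs (-\<sigma>) \<tau> z0 x0"
    using Sinv by (simp add: Rr_def Gs_def s0_def t_def q_def mult.assoc)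
  ultimately show "eval3 Q z0 x0 (Gs (-\<sigma>) \<tau> z0 x0) = 0" by simp
qed


lemma flip_t:
  assumes sg: "\<sigma> \<in> {1,-1}" "\<tau> \<in> {1,-1}" and E: "EZ Q \<sigma> \<tau>"
  shows "EZ Q \<sigma> (-\<tau>)"
  unfolding EZ_def
proof (intro allI impI)
  fix z0 x0 :: real
  assume b: "0 < z0" "z0 < 1/8" "0 < x0" "x0 < 1/8"
  note bf = box_facts[OF b]
  define q where "q = x0 * z0^2"
  define t0 where "t0 = sqrt (1 - 4 * q)"
  define s0 where "s0 = sqrt (1 - 4 * z0^2)"
  have q0: "0 < q" "q < 1/4" and t0: "0 < t0" "t0 < 1" and s0: "0 < s0" "s0 < 1" and st: "s0 \<noteq> t0"
    using bf by (auto simp: q_def t0_def s0_def)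
  define al where "al = sqrt q"
  have al: "0 < al" "al^2 = q" using q0 by (auto simp: al_def)
  have "al < sqrt (1/4)" using q0 unfolding al_def by (simp only: real_sqrt_less_iff)
  then have al2: "al < 1/2" by (simp add: real_sqrt_divide)
  obtain v0 where v0: "0 < v0" "v0 < 1" "v0 / (1 + v0^2) = al" "(1 - v0^2) / (1 + v0^2) = t0"
    using param[of al] al(1) al2 al(2) unfolding t0_def by auto
  have z00: "z0 \<noteq> 0" using b by simp
  define Xr where "Xr = (\<lambda>v::real. (v / (1 + v^2))^2 / z0^2)"
  define Tr where "Tr = (\<lambda>v::real. (1 - v^2) / (1 + v^2))"
  define Rr where "Rr = (\<lambda>v::real. 2 * (1 - \<tau> * Tr v) / (\<tau> * Tr v * (\<sigma> * s0 + \<tau> * Tr v)^2))"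
  define F where "F = (\<lambda>w::complex. eval3c Q (of_real z0) ((w / (1 + w^2))^2 / of_real (z0^2))
      (2 * (1 - of_real \<tau> * ((1 - w^2) / (1 + w^2))) / (of_real \<tau> * ((1 - w^2) / (1 + w^2)) *
         (of_real (\<sigma> * s0) + of_real \<tau> * ((1 - w^2) / (1 + w^2)))^2)))"
  have Freal: "F (of_real v) = of_real (eval3 Q z0 (Xr v) (Rr v))" for v
  proof -
    have "F (of_real v) = eval3c Q (of_real z0) (of_real (Xr v)) (of_real (Rr v))"
      unfolding F_def Xr_def Rr_def Tr_def by simp
    then show ?thesis by (simp add: eval3c_real)
  qed
  have XZ: "Xr v * z0^2 = (v / (1 + v^2))^2" for v using z00 by (simp add: Xr_def)
  have GR: "Gs \<sigma> \<tau>' z0 (Xr v) = 2 * (1 - \<tau>' * Tr v) / (\<tau>' * Tr v * (\<sigma> * s0 + \<tau>' * Tr v)^2)"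
    if "0 < v" "v \<le> 1" for v \<tau>'
  proof -
    have "sqrt (1 - 4 * Xr v * z0^2) = Tr v" using sqrt_param[of v] that XZ[of v] by (simp add: Tr_def mult.assoc)
    then show ?thesis by (simp add: Gs_def s0_def)
  qed
  define a where "a = \<sigma> * s0 + \<tau>"
  define bb where "bb = \<sigma> * s0 - \<tau>"
  have a0: "a \<noteq> 0" using sgn_sum_nz[OF sg(1,2) s0(1), of 1] s0 unfolding a_def by auto
  have key: "a + bb * v^2 = (1 + v^2) * (\<sigma> * s0 + \<tau> * Tr v)" for v :: real
  proof -
    have "1 + v^2 \<noteq> 0" using one_sq_pos[of v] by simp
    then show ?thesis by (simp add: a_def bb_def Tr_def field_simps power2_eq_square)
  qed
  define T where "T = {w::complex. 1 + 1 * w^2 = 0} \<union> {w. 1 + (-1) * w^2 = 0} \<union> {w. of_real a + of_real bb * w^2 = 0}"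
  define \<Omega> where "\<Omega> = UNIV - T"
  have fin: "finite T" unfolding T_def
    using quad_roots_finite[of 1 1] quad_roots_finite[of 1 "-1"] quad_roots_finite[of "of_real a" "of_real bb"] a0 by auto
  have op: "open \<Omega>" and co: "connected \<Omega>" using conn_cofinite[OF fin] unfolding \<Omega>_def by auto
  have dom: "1 + w^2 \<noteq> 0" "(1 - w^2) / (1 + w^2) \<noteq> 0"
     "of_real (\<sigma> * s0) + of_real \<tau> * ((1 - w^2) / (1 + w^2)) \<noteq> 0" if "w \<in> \<Omega>" for w
  proof -
    show "1 + w^2 \<noteq> 0" using that by (auto simp: \<Omega>_def T_def)
    have "1 - w^2 \<noteq> 0" using that by (auto simp: \<Omega>_def T_def)
    then show "(1 - w^2) / (1 + w^2) \<noteq> 0" using \<open>1 + w^2 \<noteq> 0\<close> by simp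
    have "of_real a + of_real bb * w^2 \<noteq> 0" using that by (auto simp: \<Omega>_def T_def)
    moreover have "of_real a + of_real bb * w^2 = (1 + w^2) * (of_real (\<sigma> * s0) + of_real \<tau> * ((1 - w^2) / (1 + w^2)))"
      using \<open>1 + w^2 \<noteq> 0\<close> by (simp add: a_def bb_def field_simps power2_eq_square)
    ultimately show "of_real (\<sigma> * s0) + of_real \<tau> * ((1 - w^2) / (1 + w^2)) \<noteq> 0" by auto
  qed
  have tau0: "complex_of_real \<tau> \<noteq> 0" using sg by auto
  have z0c: "complex_of_real (z0^2) \<noteq> 0" using z00 by simp
  have hol: "F holomorphic_on \<Omega>"
    unfolding F_def
    by (intro hol_eval3c holomorphic_intros) (use dom tau0 z0c in auto)
  have inreal: "complex_of_real v \<in> \<Omega>" if "1 - v^2 \<noteq> 0" "\<sigma> * s0 + \<tau> * Tr v \<noteq> 0" for v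
  proof -
    have "1 + (complex_of_real v)^2 \<noteq> 0"
    proof -
      have "1 + v^2 \<noteq> 0" using one_sq_pos[of v] by simp
      then have "complex_of_real (1 + v^2) \<noteq> 0" by (metis of_real_eq_0_iff)
      then show ?thesis by simp
    qed
    moreover have "1 + (-1) * (complex_of_real v)^2 \<noteq> 0"
    proof -
      have "complex_of_real (1 - v^2) \<noteq> 0" using that(1) by (metis of_real_eq_0_iff)
      then show ?thesis by simp
    qed
    moreover have "of_real a + of_real bb * (complex_of_real v)^2 \<noteq> 0"
    proof -
      have "a + bb * v^2 \<noteq> 0" using key[of v] that(2) one_sq_pos[of v] by simp
      then have "complex_of_real (a + bb * v^2) \<noteq> 0" by (metis of_real_eq_0_iff)
      then show ?thesis by simp
    qed
    ultimately show ?thesis by (auto simp: \<Omega>_def T_def)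
  qed
  have Tv0: "Tr v0 = t0" using v0 by (simp add: Tr_def)
  have v0O: "complex_of_real v0 \<in> \<Omega>"
  proof (rule inreal)
    have "v0^2 < 1" using power_strict_mono[of v0 1 2] v0 by simp
    then show "1 - v0^2 \<noteq> 0" by simp
    show "\<sigma> * s0 + \<tau> * Tr v0 \<noteq> 0" using Tv0 sgn_sum_nz[OF sg s0(1) t0(1) st] by simp
  qed
  have Tinv: "Tr (1/v0) = - t0" using sr_inv[of v0] v0 Tv0 by (simp add: Tr_def)
  have w0: "complex_of_real (1/v0) \<in> \<Omega>"
  proof (rule inreal)
    have "1 < 1/v0" using v0 by simp
    then have "1 < (1/v0)^2" by (simp add: one_less_power)
    then show "1 - (1/v0)^2 \<noteq> 0" by simp
    have "\<sigma> * s0 + (-\<tau>) * t0 \<noteq> 0" using sgn_sum_nz[OF sg(1) _ s0(1) t0(1) st, of "-\<tau>"] sg by auto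
    then show "\<sigma> * s0 + \<tau> * Tr (1/v0) \<noteq> 0" using Tinv by simp
  qed
  have tX: "(Xr \<longlongrightarrow> Xr v0) (at v0)" unfolding Xr_def
    by (intro tendsto_intros) (use one_sq_pos[of v0] z00 in simp_all)
  have Xv0: "Xr v0 = x0"
  proof -
    have "Xr v0 * z0^2 = x0 * z0^2" using XZ[of v0] v0 al by (simp add: q_def)
    then show ?thesis using z00 by simp
  qed
  have ev: "eventually (\<lambda>v. 0 < v \<and> v < 1 \<and> 0 < Xr v \<and> Xr v < 1/8) (at v0)"
  proof -
    have "eventually (\<lambda>v. 0 < v) (at v0)" "eventually (\<lambda>v. v < 1) (at v0)"
      using v0 by (auto intro: order_tendstoD[OF tendsto_ident_at])
    moreover have "eventually (\<lambda>v. 0 < Xr v) (at v0)"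
      using order_tendstoD(1)[OF tX, of 0] Xv0 b by simp
    moreover have "eventually (\<lambda>v. Xr v < 1/8) (at v0)"
      using order_tendstoD(2)[OF tX, of "1/8"] Xv0 b by simp
    ultimately show ?thesis by eventually_elim auto
  qed
  have evF: "eventually (\<lambda>v. F (of_real v) = 0) (at v0)"
    using ev
  proof eventually_elim
    case (elim v)
    have "eval3 Q z0 (Xr v) (Gs \<sigma> \<tau> z0 (Xr v)) = 0" using E elim b by (auto simp: EZ_def)
    then show ?case using Freal[of v] GR[of v \<tau>] elim by (simp add: Rr_def)
  qed
  have "F (complex_of_real (1/v0)) = 0" by (rule cont_real[OF hol op co v0O evF w0])
  then have "complex_of_real (eval3 Q z0 (Xr (1/v0)) (Rr (1/v0))) = 0" by (simp only: Freal)
  then have "eval3 Q z0 (Xr (1/v0)) (Rr (1/v0)) = 0" by (simp only: of_real_eq_0_iff)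
  moreover have "Xr (1/v0) = x0" using zr_inv[of v0] v0 Xv0 by (simp add: Xr_def)
  moreover have "Rr (1/v0) = Gs \<sigma> (-\<tau>) z0 x0"
    using Tinv by (simp add: Rr_def Gs_def s0_def t0_def q_def mult.assoc)
  ultimately show "eval3 Q z0 x0 (Gs \<sigma> (-\<tau>) z0 x0) = 0" by simp
qed


lemma four_distinct:
  fixes s t :: real
  assumes "0 < s" "0 < t" "t < 1" "s \<noteq> t"
  defines "G \<equiv> \<lambda>\<sigma> \<tau>. 2 * (1 - \<tau> * t) / (\<tau> * t * (\<sigma> * s + \<tau> * t)^2)"
  shows "card {G 1 1, G (-1) 1, G 1 (-1), G (-1) (-1)} = 4"
proof -
  define A where "A = 2 * (1 - t) / t"
  define B where "B = 2 * (1 + t) / t"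
  have A0: "A > 0" and B0: "B > 0" using assms by (auto simp: A_def B_def)
  have X: "(s + t)^2 > 0" "(t - s)^2 > 0" using assms by auto
  have XY: "(s + t)^2 \<noteq> (t - s)^2"
  proof
    assume "(s + t)^2 = (t - s)^2"
    then have "s * t = 0" by algebra
    then show False using assms by simp
  qed
  have g1: "G 1 1 = A / (s + t)^2" by (simp add: G_def A_def)
  have g2: "G (-1) 1 = A / (t - s)^2" by (simp add: G_def A_def)
  have g3: "G 1 (-1) = - (B / (t - s)^2)"
  proof -
    have "(s - t)^2 = (t - s)^2" by algebra
    then show ?thesis by (simp add: G_def B_def)
  qed
  have g4: "G (-1) (-1) = - (B / (s + t)^2)"
  proof -
    have "(- s - t)^2 = (s + t)^2" "(- t - s)^2 = (s + t)^2" by algebra+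
    then show ?thesis by (simp add: G_def B_def)
  qed
  have p1: "A / (s + t)^2 > 0" "A / (t - s)^2 > 0" "B / (t - s)^2 > 0" "B / (s + t)^2 > 0"
    using A0 B0 X by auto
  have d12: "A / (s + t)^2 \<noteq> A / (t - s)^2" using A0 X XY by (simp add: frac_eq_eq)
  have d34: "B / (t - s)^2 \<noteq> B / (s + t)^2" using B0 X XY by (simp add: frac_eq_eq)
  show ?thesis unfolding g1 g2 g3 g4 using p1 d12 d34 by auto
qed

lemma eval3_ev2: "eval3 Q z x y = poly (map_poly (\<lambda>q. ev2 q z x) Q) y"
  by (simp add: eval3_def ev2_def)

lemma no_low_degree:
  assumes Q0: "Q \<noteq> 0" and dQ: "degree Q < 4"
    and H: "\<forall>(z, x)\<in>{(z, x). \<bar>z\<bar> < 1/8 \<and> \<bar>x\<bar> < 1/8}. eval3 Q z x (Gclosed z x) = 0"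
  shows False
proof -
  have E11: "EZ Q 1 1" using H by (auto simp: EZ_def Gs11)
  have E1m: "EZ Q 1 (-1)" using flip_t[OF _ _ E11] by simp
  have Em1: "EZ Q (-1) 1" using flip_s[OF _ _ E11] by simp
  have Emm: "EZ Q (-1) (-1)" using flip_s[OF _ _ E1m] by simp
  have pz: "map_poly (\<lambda>q. ev2 q z x) Q = 0" if b: "0 < z" "z < 1/8" "0 < x" "x < 1/8" for z x
  proof (rule ccontr)
    define p where "p = map_poly (\<lambda>q. ev2 q z x) Q"
    assume "map_poly (\<lambda>q. ev2 q z x) Q \<noteq> 0"
    then have p0: "p \<noteq> 0" by (simp add: p_def)
    note bf = box_facts[OF b]
    define s t where "s = sqrt (1 - 4*z^2)" and "t = sqrt (1 - 4*x*z^2)"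
    have st: "0 < s" "0 < t" "t < 1" "s \<noteq> t" using bf by (auto simp: s_def t_def mult.assoc)
    define G where "G \<equiv> \<lambda>\<sigma> \<tau>. 2 * (1 - \<tau> * t) / (\<tau> * t * (\<sigma> * s + \<tau> * t)^2)"
    have GG: "Gs \<sigma> \<tau> z x = G \<sigma> \<tau>" for \<sigma> \<tau> by (simp add: G_def Gs_def s_def t_def)
    have r: "poly p (Gs \<sigma> \<tau> z x) = 0" if "EZ Q \<sigma> \<tau>" for \<sigma> \<tau>
      using that b unfolding EZ_def p_def eval3_ev2 by auto
    have roots: "{G 1 1, G (-1) 1, G 1 (-1), G (-1) (-1)} \<subseteq> {y. poly p y = 0}"
      using r[OF E11] r[OF E1m] r[OF Em1] r[OF Emm] by (simp add: GG)
    have "4 = card {G 1 1, G (-1) 1, G 1 (-1), G (-1) (-1)}"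
      using four_distinct[OF st] unfolding G_def by simp
    also have "\<dots> \<le> card {y. poly p y = 0}"
      by (rule card_mono[OF poly_roots_finite[OF p0] roots])
    also have "\<dots> \<le> degree p" by (rule card_poly_roots_bound[OF p0])
    also have "\<dots> \<le> degree Q" unfolding p_def by (rule map_poly_degree_leq)
    finally show False using dQ by simp
  qed
  have "coeff Q i = 0" for i
  proof (rule bivar_zero)
    fix z x :: real assume "0 < z" "z < 1/8" "0 < x" "x < 1/8"
    then have "coeff (map_poly (\<lambda>q. ev2 q z x) Q) i = 0" using pz by simp
    then show "ev2 (coeff Q i) z x = 0" by (simp add: coeff_map_poly)
  qed
  then have "Q = 0" by (simp add: poly_eq_iff)
  then show False using Q0 by simp
qed

theorem proposition15:
  "\<exists>r>0.
     (\<forall>z x. \<bar>z\<bar> < r \<and> \<bar>x\<bar> < r \<longrightarrow>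
        ((\<lambda>(n, m). real (g n m) * z ^ n * x ^ m) has_sum Gclosed z x) UNIV) \<and>
     algebraic_of_degree 4 Gclosed {(z, x). \<bar>z\<bar> < r \<and> \<bar>x\<bar> < r}"
proof (intro exI[of _ "1/8"] conjI allI impI)
  show "(0::real) < 1/8" by simp
  fix z x :: real
  assume "\<bar>z\<bar> < 1/8 \<and> \<bar>x\<bar> < 1/8"
  then show "((\<lambda>(n, m). real (g n m) * z ^ n * x ^ m) has_sum Gclosed z x) UNIV"
    using part1 by blast
next
  show "algebraic_of_degree 4 Gclosed {(z, x). \<bar>z\<bar> < 1/8 \<and> \<bar>x\<bar> < 1/8}"
    unfolding algebraic_of_degree_def
  proof (intro conjI allI impI)
    show "\<exists>P. P \<noteq> 0 \<and> degree P = 4 \<and> (\<forall>(z, x)\<in>{(z, x). \<bar>z\<bar> < 1/8 \<and> \<bar>x\<bar> < 1/8}. eval3 P z x (Gclosed z x) = 0)"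
      using Pmin_nz degree_Pmin Pmin_root by blast
    fix Q :: "real poly poly poly"
    assume "Q \<noteq> 0 \<and> degree Q < 4"
    then show "\<not> (\<forall>(z, x)\<in>{(z, x). \<bar>z\<bar> < 1/8 \<and> \<bar>x\<bar> < 1/8}. eval3 Q z x (Gclosed z x) = 0)"
      using no_low_degree by blast
  qed
qed

end
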